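(* Let the setting and the algorithm RandProx-ADMM be as in the context. Suppose that $\mu_g>0$, $\mu_{h^*}>0$ and $\gamma>0$, and set $\tau:=\frac{1}{\gamma(1+\omega)}$. For $t\ge0$ let $\Psi^t:=\frac{1}{\gamma}\|x^t-x^\star\|^2+(1+\omega)\big(\gamma(1+\omega)+2\mu_{h^*}\big)\|u^t-u^\star\|^2$, where $x^\star,u^\star$ are the unique solutions of the primal and dual problems. Then for every $t\ge0$, $\mathbb{E}[\Psi^t]\le c^t\Psi^0$, where $$c:=\max\left(\frac{1}{1+\gamma\mu_g},\ 1-\frac{2\tau\mu_{h^*}}{(1+\omega)(1+2\tau\mu_{h^*})}\right)=1-\min\left(\frac{\gamma\mu_g}{1+\gamma\mu_g},\ \frac{2\tau\mu_{h^*}}{(1+\omega)(1+2\tau\mu_{h^*})}\right)<1.$$ Moreover, $(x^t)$ and $(\hat{x}^t)$ both converge to $x^\star$ and $(u^t)$ converges to $u^\star$, almost surely.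
   Context: $\mathcal{X}$ is a finite-dimensional real Hilbert space; $g,h:\mathcal{X}\to\mathbb{R}\cup\{+\infty\}$ proper closed convex; $g$ is $\mu_g$-strongly convex and $h^*$ (conjugate of $h$) is $\mu_{h^*}$-strongly convex (a convex $\phi$ is $\mu$-strongly convex if $\phi-\frac{\mu}{2}\|\cdot\|^2$ is convex). $\mathrm{prox}_{\gamma\phi}(x):=\arg\min_{x'}(\gamma\phi(x')+\frac12\|x'-x\|^2)$. Primal problem: minimize $g(x)+h(x)$; dual: minimize $g^*(-u)+h^*(u)$. It is assumed there exists $(x^\star,u^\star)$ with $0\in\partial g(x^\star)+u^\star$, $x^\star\in\partial h^*(u^\star)$. Algorithm RandProx-ADMM: inputs $x^0,u^0\in\mathcal{X}$, $\gamma>0$, $\omega\ge0$; for $t\ge0$: $\hat{x}^t:=\mathrm{prox}_{\gamma g}(x^t-\gamma u^t)$; $d^t:=\mathcal{R}^t\big(\hat{x}^t-\mathrm{prox}_{\gamma(1+\omega)h}(\hat{x}^t+\gamma(1+\omega)u^t)\big)$; $x^{t+1}:=\hat{x}^t-\frac{1}{1+\omega}d^t$; $u^{t+1}:=u^t+\frac{1}{\gamma(1+\omega)^2}d^t$. With $\mathcal{F}_t$ the $\sigma$-algebra generated by $(x^0,u^0),\dots,(x^t,u^t)$ and $r^t:=\hat{x}^t-\mathrm{prox}_{\gamma(1+\omega)h}(\hat{x}^t+\gamma(1+\omega)u^t)$, the random estimate satisfies $\mathbb{E}[\mathcal{R}^t(r^t)\mid\mathcal{F}_t]=r^t$ and $\mathbb{E}[\|\mathcal{R}^t(r^t)-r^t\|^2\mid\mathcal{F}_t]\le\omega\|r^t\|^2$.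 *)

theory Defs
  imports "HOL-Analysis.Analysis" "HOL-Probability.Probability"
begin

definition proper_fun :: "('a::euclidean_space \<Rightarrow> ereal) \<Rightarrow> bool" where
  "proper_fun f \<longleftrightarrow> (\<forall>x. f x \<noteq> -\<infinity>) \<and> (\<exists>x. f x < \<infinity>)"

definition closed_fun :: "('a::euclidean_space \<Rightarrow> ereal) \<Rightarrow> bool" where
  "closed_fun f \<longleftrightarrow> closed {(x, y::real). f x \<le> ereal y}"

definition convex_fun :: "('a::euclidean_space \<Rightarrow> ereal) \<Rightarrow> bool" where
  "convex_fun f \<longleftrightarrow> (\<forall>x y. \<forall>t::real. 0 \<le> t \<and> t \<le> 1 \<longrightarrow>
      f ((1 - t) *\<^sub>R x + t *\<^sub>R y) \<le> ereal (1 - t) * f x + ereal t * f y)"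

definition strongly_convex_fun :: "real \<Rightarrow> ('a::euclidean_space \<Rightarrow> ereal) \<Rightarrow> bool" where
  "strongly_convex_fun \<mu> f \<longleftrightarrow> convex_fun (\<lambda>x. f x - ereal (\<mu> / 2 * (norm x)\<^sup>2))"

definition conj_fun :: "('a::euclidean_space \<Rightarrow> ereal) \<Rightarrow> 'a \<Rightarrow> ereal" where
  "conj_fun f u = (SUP x. ereal (inner u x) - f x)"

definition subdiff :: "('a::euclidean_space \<Rightarrow> ereal) \<Rightarrow> 'a \<Rightarrow> 'a set" where
  "subdiff f x = {v. \<bar>f x\<bar> \<noteq> \<infinity> \<and> (\<forall>y. f x + ereal (inner v (y - x)) \<le> f y)}"

definition prox :: "real \<Rightarrow> ('a::euclidean_space \<Rightarrow> ereal) \<Rightarrow> 'a \<Rightarrow> 'a" where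
  "prox \<gamma> \<phi> x = (SOME p. \<forall>y. ereal \<gamma> * \<phi> p + ereal ((norm (p - x))\<^sup>2 / 2)
                              \<le> ereal \<gamma> * \<phi> y + ereal ((norm (y - x))\<^sup>2 / 2))"

definition rp_xhat :: "real \<Rightarrow> ('a::euclidean_space \<Rightarrow> ereal) \<Rightarrow> 'a \<Rightarrow> 'a \<Rightarrow> 'a" where
  "rp_xhat \<gamma> g x u = prox \<gamma> g (x - \<gamma> *\<^sub>R u)"

definition rp_res :: "real \<Rightarrow> real \<Rightarrow> ('a::euclidean_space \<Rightarrow> ereal) \<Rightarrow> ('a \<Rightarrow> ereal) \<Rightarrow> 'a \<Rightarrow> 'a \<Rightarrow> 'a" where
  "rp_res \<gamma> \<omega> g h x u =
     rp_xhat \<gamma> g x u - prox (\<gamma> * (1 + \<omega>)) h (rp_xhat \<gamma> g x u + (\<gamma> * (1 + \<omega>)) *\<^sub>R u)"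

text \<open>Iterates \<open>(x^t, u^t)\<close> as functions of the sample point; \<open>R t s\<close> is the
  random operator \<open>\<R>^t\<close> at sample point \<open>s\<close>.\<close>
primrec rp_iter :: "real \<Rightarrow> real \<Rightarrow> ('a::euclidean_space \<Rightarrow> ereal) \<Rightarrow> ('a \<Rightarrow> ereal)
    \<Rightarrow> (nat \<Rightarrow> 's \<Rightarrow> 'a \<Rightarrow> 'a) \<Rightarrow> 'a \<Rightarrow> 'a \<Rightarrow> nat \<Rightarrow> 's \<Rightarrow> 'a \<times> 'a" where
  "rp_iter \<gamma> \<omega> g h R x0 u0 0 s = (x0, u0)"
| "rp_iter \<gamma> \<omega> g h R x0 u0 (Suc t) s =
    (case rp_iter \<gamma> \<omega> g h R x0 u0 t s of (x, u) \<Rightarrow>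
       (let d = R t s (rp_res \<gamma> \<omega> g h x u)
        in (rp_xhat \<gamma> g x u - (1 / (1 + \<omega>)) *\<^sub>R d,
            u + (1 / (\<gamma> * (1 + \<omega>)\<^sup>2)) *\<^sub>R d)))"

definition rp_x where "rp_x \<gamma> \<omega> g h R x0 u0 t s = fst (rp_iter \<gamma> \<omega> g h R x0 u0 t s)"
definition rp_u where "rp_u \<gamma> \<omega> g h R x0 u0 t s = snd (rp_iter \<gamma> \<omega> g h R x0 u0 t s)"

definition rp_filt :: "'s measure \<Rightarrow> (nat \<Rightarrow> 's \<Rightarrow> 'a::euclidean_space) \<Rightarrow> (nat \<Rightarrow> 's \<Rightarrow> 'a) \<Rightarrow> nat \<Rightarrow> 's measure" where
  "rp_filt M X U t = sigma (space M)
     {(\<lambda>s. (X k s, U k s)) -` A \<inter> space M | k A. k \<le> t \<and> A \<in> sets borel}"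

end

theory Submission
  imports Defs
begin

lemma eps_lemma:
  fixes A C :: real
  assumes "\<And>t. 0 < t \<Longrightarrow> t < 1 \<Longrightarrow> 0 \<le> A + t * C"
  shows "0 \<le> A"
proof (rule ccontr)
  assume "\<not> 0 \<le> A"
  hence A: "A < 0" by simp
  define t where "t = min (1/2) (-A / (2 * (\<bar>C\<bar> + 1)))"
  have "0 < -A / (2 * (\<bar>C\<bar> + 1))" using A by (intro divide_pos_pos) auto
  hence t0: "0 < t" by (simp add: t_def)
  have t1: "t < 1" by (simp add: t_def)
  have "t * C \<le> t * \<bar>C\<bar>" using t0 by (simp add: mult_left_mono)
  also have "t * \<bar>C\<bar> \<le> (-A / (2 * (\<bar>C\<bar> + 1))) * \<bar>C\<bar>"
    by (rule mult_right_mono) (auto simp: t_def)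
  also have "\<dots> < -A"
  proof -
    have "(-A / (2 * (\<bar>C\<bar> + 1))) * \<bar>C\<bar> = -A * (\<bar>C\<bar> / (2 * (\<bar>C\<bar> + 1)))" by simp
    also have "\<dots> < -A * 1"
      using A by (intro mult_strict_left_mono) (auto simp: field_simps)
    finally show ?thesis by simp
  qed
  finally have "A + t * C < 0" by simp
  with assms[OF t0 t1] show False by simp
qed

lemma subdiffD:
  assumes "v \<in> subdiff f x"
  obtains fx where "f x = ereal fx" "\<And>y. ereal (fx + inner v (y - x)) \<le> f y"
proof -
  from assms have fin: "\<bar>f x\<bar> \<noteq> \<infinity>" and le: "\<And>y. f x + ereal (inner v (y - x)) \<le> f y"
    by (auto simp: subdiff_def)
  obtain fx where "f x = ereal fx" using fin by (cases "f x") auto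
  with le show ?thesis using that by (metis plus_ereal.simps(1))
qed

lemma subdiffI:
  assumes "f x = ereal fx" "\<And>y. ereal (fx + inner v (y - x)) \<le> f y"
  shows "v \<in> subdiff f x"
  using assms by (auto simp: subdiff_def)

lemma subdiff_conj:
  assumes "v \<in> subdiff f x"
  shows "x \<in> subdiff (conj_fun f) v"
proof -
  obtain fx where fx: "f x = ereal fx" and le: "\<And>y. ereal (fx + inner v (y - x)) \<le> f y"
    using subdiffD[OF assms] by blast
  have c: "conj_fun f v = ereal (inner v x - fx)"
    unfolding conj_fun_def
  proof (rule antisym)
    show "(SUP y. ereal (inner v y) - f y) \<le> ereal (inner v x - fx)"
    proof (rule SUP_least)
      fix y
      show "ereal (inner v y) - f y \<le> ereal (inner v x - fx)"
      proof (cases "f y")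
        case (real r)
        with le[of y] have "fx + inner v (y - x) \<le> r" by simp
        thus ?thesis using real by (simp add: inner_diff_right)
      qed (use le[of y] in auto)
    qed
    show "ereal (inner v x - fx) \<le> (SUP y. ereal (inner v y) - f y)"
      by (rule SUP_upper2[of x]) (auto simp: fx)
  qed
  show ?thesis
  proof (rule subdiffI[where f="conj_fun f" and x=v and v=x and fx="inner v x - fx"])
    show "conj_fun f v = ereal (inner v x - fx)" by (rule c)
  next
    fix w
    have "ereal (inner v x - fx + inner x (w - v)) = ereal (inner w x) - f x"
      by (simp add: fx inner_diff_right inner_commute)
    also have "\<dots> \<le> conj_fun f w" unfolding conj_fun_def by (rule SUP_upper) simp
    finally show "ereal (inner v x - fx + inner x (w - v)) \<le> conj_fun f w" .
  qed
qed

lemma subdiff_strong: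
  assumes sc: "strongly_convex_fun \<mu> f" and v: "v \<in> subdiff f x" and fx: "f x = ereal fx"
  shows "ereal (fx + inner v (y - x) + \<mu> / 2 * (norm (y - x))\<^sup>2) \<le> f y"
proof -
  obtain fx' where fx': "f x = ereal fx'" and le: "\<And>y. ereal (fx' + inner v (y - x)) \<le> f y"
    using subdiffD[OF v] by blast
  have [simp]: "fx' = fx" using fx fx' by simp
  show ?thesis
  proof (cases "f y")
    case PInf thus ?thesis by simp
  next
    case MInf with le[of y] show ?thesis by simp
  next
    case (real fy)
    have key: "0 \<le> (fy - fx - inner v (y - x) - \<mu> / 2 * (norm (y - x))\<^sup>2) + t * (\<mu> / 2 * (norm (y - x))\<^sup>2)"
      if t: "0 < t" "t < 1" for t
    proof -
      define z where "z = (1 - t) *\<^sub>R x + t *\<^sub>R y"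
      have cv: "f z - ereal (\<mu> / 2 * (norm z)\<^sup>2) \<le> ereal (1 - t) * (f x - ereal (\<mu> / 2 * (norm x)\<^sup>2))
                 + ereal t * (f y - ereal (\<mu> / 2 * (norm y)\<^sup>2))"
        using sc t unfolding strongly_convex_fun_def convex_fun_def z_def by auto
      have zx: "z - x = t *\<^sub>R (y - x)" by (simp add: z_def algebra_simps)
      have lz: "ereal (fx + t * inner v (y - x)) \<le> f z" using le[of z] by (simp add: zx)
      obtain fz where fz: "f z = ereal fz"
      proof (cases "f z")
        case PInf
        with cv show ?thesis by (simp add: fx real)
      next
        case MInf with lz show ?thesis by simp
      qed
      from cv have i1: "fz - \<mu> / 2 * (norm z)\<^sup>2 \<le> (1 - t) * (fx - \<mu> / 2 * (norm x)\<^sup>2) + t * (fy - \<mu> / 2 * (norm y)\<^sup>2)"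
        by (simp add: fz fx real)
      from lz have i2: "fx + t * inner v (y - x) \<le> fz" by (simp add: fz)
      have nz: "(1 - t) * (norm x)\<^sup>2 + t * (norm y)\<^sup>2 - (norm z)\<^sup>2 = t * (1 - t) * (norm (y - x))\<^sup>2"
        unfolding z_def power2_norm_eq_inner
        by (simp add: inner_add_left inner_add_right inner_diff_left inner_diff_right inner_commute algebra_simps)
      have i3: "fz \<le> (1 - t) * fx + t * fy - \<mu> / 2 * ((1 - t) * (norm x)\<^sup>2 + t * (norm y)\<^sup>2 - (norm z)\<^sup>2)"
        using i1 by (simp add: field_simps)
      have "t * (fy - fx - inner v (y - x)) \<ge> \<mu> / 2 * (t * (1 - t) * (norm (y - x))\<^sup>2)"
        using i3 i2 unfolding nz by (simp add: algebra_simps)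
      hence "t * (fy - fx - inner v (y - x)) \<ge> t * (\<mu> / 2 * ((1 - t) * (norm (y - x))\<^sup>2))"
        by (simp add: algebra_simps)
      hence "fy - fx - inner v (y - x) \<ge> \<mu> / 2 * ((1 - t) * (norm (y - x))\<^sup>2)"
        using t by simp
      thus ?thesis by (simp add: algebra_simps)
    qed
    have "0 \<le> fy - fx - inner v (y - x) - \<mu> / 2 * (norm (y - x))\<^sup>2"
      by (rule eps_lemma[OF key])
    thus ?thesis using real by simp
  qed
qed

lemma convex_strong0: "convex_fun f \<Longrightarrow> strongly_convex_fun 0 f"
  by (simp add: strongly_convex_fun_def zero_ereal_def[symmetric])

lemma subdiff_strong_mono:
  assumes sc: "strongly_convex_fun \<mu> f" and v1: "v1 \<in> subdiff f x1" and v2: "v2 \<in> subdiff f x2"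
  shows "\<mu> * (norm (x1 - x2))\<^sup>2 \<le> inner (v1 - v2) (x1 - x2)"
proof -
  obtain f1 where f1: "f x1 = ereal f1" using subdiffD[OF v1] by blast
  obtain f2 where f2: "f x2 = ereal f2" using subdiffD[OF v2] by blast
  have a: "f1 + inner v1 (x2 - x1) + \<mu> / 2 * (norm (x2 - x1))\<^sup>2 \<le> f2"
    using subdiff_strong[OF sc v1 f1, of x2] f2 by simp
  have b: "f2 + inner v2 (x1 - x2) + \<mu> / 2 * (norm (x1 - x2))\<^sup>2 \<le> f1"
    using subdiff_strong[OF sc v2 f2, of x1] f1 by simp
  have n: "norm (x2 - x1) = norm (x1 - x2)" by (rule norm_minus_commute)
  have "inner v1 (x2 - x1) + inner v2 (x1 - x2) = - inner (v1 - v2) (x1 - x2)"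
    by (simp add: inner_diff_left inner_diff_right)
  with a b n show ?thesis by (simp add: algebra_simps)
qed

definition good_fun :: "('a::euclidean_space \<Rightarrow> ereal) \<Rightarrow> bool" where
  "good_fun \<phi> \<longleftrightarrow> convex_fun \<phi> \<and> closed_fun \<phi> \<and> (\<exists>y0. \<phi> y0 < \<infinity>)
     \<and> (\<exists>a b. \<forall>y. ereal (inner a y + b) \<le> \<phi> y)"

lemma real_arith1: "t * G + (2 * t * I + t\<^sup>2 * S) / 2 = t * (G + I + t * (S / 2))" for t G I S :: real
  by (simp add: field_simps power2_eq_square)

lemma level_set_eq:
  fixes \<phi> :: "'a::euclidean_space \<Rightarrow> ereal"
  assumes "\<phi> y \<noteq> -\<infinity>" "\<gamma> > 0"
  shows "(ereal \<gamma> * \<phi> y + ereal N \<le> ereal c) \<longleftrightarrow> \<phi> y \<le> ereal ((c - N) / \<gamma>)"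
proof (cases "\<phi> y")
  case (real r)
  thus ?thesis using assms by (simp add: pos_le_divide_eq algebra_simps)
next
  case PInf thus ?thesis using assms by simp
next
  case MInf thus ?thesis using assms by simp
qed

lemma prox_exists:
  fixes \<phi> :: "'a::euclidean_space \<Rightarrow> ereal"
  assumes g: "good_fun \<phi>" and \<gamma>: "\<gamma> > 0"
  shows "\<exists>p. \<forall>y. ereal \<gamma> * \<phi> p + ereal ((norm (p - z))\<^sup>2 / 2) \<le> ereal \<gamma> * \<phi> y + ereal ((norm (y - z))\<^sup>2 / 2)"
proof -
  obtain y0 where y0: "\<phi> y0 < \<infinity>" using g by (auto simp: good_fun_def)
  obtain a b where ab: "\<And>y. ereal (inner a y + b) \<le> \<phi> y" using g by (auto simp: good_fun_def)
  have cl: "closed {(x, y::real). \<phi> x \<le> ereal y}" using g by (auto simp: good_fun_def closed_fun_def)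
  have nm: "\<phi> y \<noteq> -\<infinity>" for y using ab[of y] by auto
  define N where "N y = (norm (y - z))\<^sup>2 / 2" for y
  define F where "F y = ereal \<gamma> * \<phi> y + ereal (N y)" for y
  define L where "L c = {y. F y \<le> ereal c}" for c
  have Leq: "L c = (\<lambda>y. (y, (c - N y) / \<gamma>)) -` {(x, y::real). \<phi> x \<le> ereal y}" for c
    unfolding L_def F_def by (auto simp: level_set_eq nm \<gamma>)
  have Lclosed: "closed (L c)" for c
    unfolding Leq N_def using \<gamma> by (intro continuous_closed_vimage[OF cl]) (auto intro!: continuous_intros)
  have Lmono: "L c \<subseteq> L c'" if "c \<le> c'" for c c'
    using that unfolding L_def by (auto intro: order_trans)
  have Lbounded: "bounded (L c)" for c
  proof -
    define K where "K = c - \<gamma> * b + (norm z)\<^sup>2 / 2"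
    define \<alpha> where "\<alpha> = \<gamma> * norm a"
    show ?thesis unfolding bounded_iff
    proof (intro exI ballI)
      fix y assume "y \<in> L c"
      hence Fy: "F y \<le> ereal c" by (simp add: L_def)
      obtain r where r: "\<phi> y = ereal r" using Fy nm[of y] \<gamma> by (cases "\<phi> y") (auto simp: F_def)
      have ri: "inner a y + b \<le> r" using ab[of y] r by simp
      have c1: "\<gamma> * r + N y \<le> c" using Fy r by (simp add: F_def)
      have c2: "\<gamma> * (inner a y + b) \<le> \<gamma> * r" using ri \<gamma> by simp
      have c3: "- (\<alpha> * norm y) \<le> \<gamma> * inner a y"
      proof -
        have "\<bar>inner a y\<bar> \<le> norm a * norm y" by (rule Cauchy_Schwarz_ineq2)
        hence "- (norm a * norm y) \<le> inner a y" by linarith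
        from mult_left_mono[OF this, of \<gamma>] \<gamma> show ?thesis unfolding \<alpha>_def by (simp add: algebra_simps)
      qed
      have c4: "(norm y)\<^sup>2 / 4 - (norm z)\<^sup>2 / 2 \<le> N y"
      proof -
        have "norm y \<le> norm (y - z) + norm z" using norm_triangle_ineq[of "y - z" z] by simp
        hence "(norm y)\<^sup>2 \<le> (norm (y - z) + norm z)\<^sup>2" by (simp add: power_mono)
        also have "\<dots> \<le> 2 * (norm (y - z))\<^sup>2 + 2 * (norm z)\<^sup>2"
        proof -
          have "0 \<le> (norm (y - z) - norm z)\<^sup>2" by simp
          thus ?thesis unfolding power2_sum power2_diff by linarith
        qed
        finally show ?thesis unfolding N_def by simp
      qed
      define n where "n = norm y"
      have c2': "\<gamma> * inner a y + \<gamma> * b \<le> \<gamma> * r" using c2 by (simp add: algebra_simps)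
      have "n\<^sup>2 / 4 - \<alpha> * n \<le> K" using c1 c2' c3 c4 unfolding K_def n_def by linarith
      moreover have "n\<^sup>2 / 8 - 2 * \<alpha>\<^sup>2 \<le> n\<^sup>2 / 4 - \<alpha> * n"
      proof -
        have "0 \<le> (n - 4 * \<alpha>)\<^sup>2 / 8" by simp
        thus ?thesis by (simp add: power2_diff algebra_simps power2_eq_square)
      qed
      ultimately have "n\<^sup>2 / 8 \<le> \<bar>K\<bar> + 2 * \<alpha>\<^sup>2" using abs_ge_self[of K] by linarith
      hence "n\<^sup>2 \<le> 8 * (\<bar>K\<bar> + 2 * \<alpha>\<^sup>2)" by simp
      moreover have "n \<le> 1 + n\<^sup>2"
      proof -
        have "0 \<le> (n - 1/2)\<^sup>2" by simp
        thus ?thesis by (simp add: power2_diff power2_eq_square algebra_simps)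
      qed
      ultimately show "norm y \<le> 1 + 8 * (\<bar>K\<bar> + 2 * \<alpha>\<^sup>2)" unfolding n_def by linarith
    qed
  qed
  have Lcompact: "compact (L c)" for c
    using Lclosed Lbounded by (simp add: compact_eq_bounded_closed)
  obtain r0 where r0: "\<phi> y0 = ereal r0" using y0 nm[of y0] by (cases "\<phi> y0") auto
  define c0 where "c0 = \<gamma> * r0 + N y0"
  have y0L: "y0 \<in> L c0" by (simp add: L_def F_def c0_def r0)
  define I where "I = {c. L c \<noteq> {}}"
  have "L c0 \<inter> (\<Inter>c\<in>I. L c) \<noteq> {}"
  proof (rule compact_imp_fip_image[OF Lcompact])
    show "closed (L c)" if "c \<in> I" for c by (rule Lclosed)
  next
    fix I' assume fin: "finite I'" and sub: "I' \<subseteq> I"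
    show "L c0 \<inter> (\<Inter>c\<in>I'. L c) \<noteq> {}"
    proof (cases "I' = {}")
      case True thus ?thesis using y0L by auto
    next
      case False
      define cm where "cm = Min I'"
      have cmI: "cm \<in> I'" using Min_in[OF fin False] by (simp add: cm_def)
      have cmle: "cm \<le> c" if "c \<in> I'" for c using Min_le[OF fin that] by (simp add: cm_def)
      define c' where "c' = min cm c0"
      have ne: "L c' \<noteq> {}" using cmI sub y0L by (auto simp: c'_def min_def I_def)
      have "L c' \<subseteq> L c0" by (rule Lmono) (simp add: c'_def)
      moreover have "L c' \<subseteq> L c" if "c \<in> I'" for c
        using cmle[OF that] by (intro Lmono) (simp add: c'_def)
      ultimately have "L c' \<subseteq> L c0 \<inter> (\<Inter>c\<in>I'. L c)" by blast
      thus ?thesis using ne by blast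
    qed
  qed
  then obtain p where p: "\<And>c. c \<in> I \<Longrightarrow> p \<in> L c" by blast
  have "F p \<le> F y" for y
  proof (cases "\<phi> y")
    case (real r)
    have "y \<in> L (\<gamma> * r + N y)" by (simp add: L_def F_def real)
    hence "(\<gamma> * r + N y) \<in> I" by (auto simp: I_def)
    hence "p \<in> L (\<gamma> * r + N y)" by (rule p)
    thus ?thesis by (simp add: L_def F_def real)
  next
    case PInf thus ?thesis using \<gamma> by (simp add: F_def)
  next
    case MInf thus ?thesis using nm by simp
  qed
  thus ?thesis unfolding F_def N_def by blast
qed

lemma prox_min:
  fixes \<phi> :: "'a::euclidean_space \<Rightarrow> ereal"
  assumes g: "good_fun \<phi>" and \<gamma>: "\<gamma> > 0"
  shows "ereal \<gamma> * \<phi> (prox \<gamma> \<phi> z) + ereal ((norm (prox \<gamma> \<phi> z - z))\<^sup>2 / 2)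
           \<le> ereal \<gamma> * \<phi> y + ereal ((norm (y - z))\<^sup>2 / 2)"
proof -
  have "\<forall>y. ereal \<gamma> * \<phi> (prox \<gamma> \<phi> z) + ereal ((norm (prox \<gamma> \<phi> z - z))\<^sup>2 / 2)
           \<le> ereal \<gamma> * \<phi> y + ereal ((norm (y - z))\<^sup>2 / 2)"
    unfolding prox_def by (rule someI_ex[OF prox_exists[OF g \<gamma>]])
  thus ?thesis by blast
qed

lemma prox_subdiff:
  fixes \<phi> :: "'a::euclidean_space \<Rightarrow> ereal"
  assumes g: "good_fun \<phi>" and \<gamma>: "\<gamma> > 0"
  shows "(1 / \<gamma>) *\<^sub>R (z - prox \<gamma> \<phi> z) \<in> subdiff \<phi> (prox \<gamma> \<phi> z)"
proof -
  define p where "p = prox \<gamma> \<phi> z"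
  have pm: "ereal \<gamma> * \<phi> p + ereal ((norm (p - z))\<^sup>2 / 2) \<le> ereal \<gamma> * \<phi> y + ereal ((norm (y - z))\<^sup>2 / 2)" for y
    unfolding p_def by (rule prox_min[OF g \<gamma>])
  obtain y0 where y0: "\<phi> y0 < \<infinity>" using g by (auto simp: good_fun_def)
  obtain a b where ab: "\<And>y. ereal (inner a y + b) \<le> \<phi> y" using g by (auto simp: good_fun_def)
  have cv: "convex_fun \<phi>" using g by (simp add: good_fun_def)
  have nm: "\<phi> y \<noteq> -\<infinity>" for y using ab[of y] by auto
  obtain fp where fp: "\<phi> p = ereal fp"
  proof (cases "\<phi> p")
    case PInf
    with pm[of y0] y0 \<gamma> show ?thesis by auto
  next
    case MInf with nm show ?thesis by auto
  qed
  show ?thesis unfolding p_def[symmetric]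
  proof (rule subdiffI[where f=\<phi> and x=p and fx=fp])
    show "\<phi> p = ereal fp" by (rule fp)
  next
    fix y
    show "ereal (fp + inner ((1 / \<gamma>) *\<^sub>R (z - p)) (y - p)) \<le> \<phi> y"
    proof (cases "\<phi> y")
      case PInf thus ?thesis by simp
    next
      case MInf with nm show ?thesis by auto
    next
      case (real fy)
      have key: "0 \<le> (\<gamma> * (fy - fp) + inner (p - z) (y - p)) + t * ((norm (y - p))\<^sup>2 / 2)"
        if t: "0 < t" "t < 1" for t
      proof -
        define yt where "yt = (1 - t) *\<^sub>R p + t *\<^sub>R y"
        have c: "\<phi> yt \<le> ereal (1 - t) * \<phi> p + ereal t * \<phi> y"
          using cv t unfolding convex_fun_def yt_def by auto
        obtain ft where ft: "\<phi> yt = ereal ft"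
        proof (cases "\<phi> yt")
          case PInf with c show ?thesis by (simp add: fp real)
        next
          case MInf with nm show ?thesis by auto
        qed
        have c': "ft \<le> (1 - t) * fp + t * fy" using c by (simp add: ft fp real)
        have m: "\<gamma> * fp + (norm (p - z))\<^sup>2 / 2 \<le> \<gamma> * ft + (norm (yt - z))\<^sup>2 / 2"
          using pm[of yt] by (simp add: ft fp)
        have yz: "yt - z = (p - z) + t *\<^sub>R (y - p)" by (simp add: yt_def algebra_simps)
        have n: "(norm (yt - z))\<^sup>2 = (norm (p - z))\<^sup>2 + 2 * t * inner (p - z) (y - p) + t\<^sup>2 * (norm (y - p))\<^sup>2"
          unfolding yz power2_norm_eq_inner
          by (simp add: inner_add_left inner_add_right inner_commute power2_eq_square algebra_simps)
        have "\<gamma> * ft \<le> \<gamma> * ((1 - t) * fp + t * fy)" using c' \<gamma> by simp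
        moreover have "\<gamma> * ((1 - t) * fp + t * fy) = \<gamma> * fp + t * (\<gamma> * (fy - fp))" by (simp add: algebra_simps)
        ultimately have "0 \<le> t * (\<gamma> * (fy - fp)) + ((norm (yt - z))\<^sup>2 - (norm (p - z))\<^sup>2) / 2"
          using m unfolding diff_divide_distrib by linarith
        also have "((norm (yt - z))\<^sup>2 - (norm (p - z))\<^sup>2) = 2 * t * inner (p - z) (y - p) + t\<^sup>2 * (norm (y - p))\<^sup>2"
          using n by simp
        also have "t * (\<gamma> * (fy - fp)) + (2 * t * inner (p - z) (y - p) + t\<^sup>2 * (norm (y - p))\<^sup>2) / 2
            = t * (\<gamma> * (fy - fp) + inner (p - z) (y - p) + t * ((norm (y - p))\<^sup>2 / 2))"
          by (rule real_arith1)
        finally have "0 \<le> t * (\<gamma> * (fy - fp) + inner (p - z) (y - p) + t * ((norm (y - p))\<^sup>2 / 2))" .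
        thus ?thesis using t by (simp add: zero_le_mult_iff)
      qed
      have "0 \<le> \<gamma> * (fy - fp) + inner (p - z) (y - p)" by (rule eps_lemma[OF key])
      hence "inner (z - p) (y - p) \<le> \<gamma> * (fy - fp)" by (simp add: inner_diff_left)
      hence "(1 / \<gamma>) * inner (z - p) (y - p) \<le> fy - fp" using \<gamma> by (simp add: field_simps)
      thus ?thesis using real by simp
    qed
  qed
qed

lemma prox_nonexp_gen:
  fixes \<phi> :: "'a::euclidean_space \<Rightarrow> ereal"
  assumes cv: "convex_fun \<phi>" and \<gamma>: "\<gamma> > 0"
    and s1: "(1 / \<gamma>) *\<^sub>R (z1 - p1) \<in> subdiff \<phi> p1"
    and s2: "(1 / \<gamma>) *\<^sub>R (z2 - p2) \<in> subdiff \<phi> p2"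
  shows "(norm (p1 - p2))\<^sup>2 \<le> inner (z1 - z2) (p1 - p2)"
proof -
  have "0 * (norm (p1 - p2))\<^sup>2 \<le> inner ((1 / \<gamma>) *\<^sub>R (z1 - p1) - (1 / \<gamma>) *\<^sub>R (z2 - p2)) (p1 - p2)"
    by (rule subdiff_strong_mono[OF convex_strong0[OF cv] s1 s2])
  moreover have "(1 / \<gamma>) *\<^sub>R (z1 - p1) - (1 / \<gamma>) *\<^sub>R (z2 - p2) = (1 / \<gamma>) *\<^sub>R ((z1 - z2) - (p1 - p2))"
    by (simp add: scaleR_diff_right)
  ultimately have "0 \<le> (1 / \<gamma>) * inner ((z1 - z2) - (p1 - p2)) (p1 - p2)"
    by simp
  hence "0 \<le> inner ((z1 - z2) - (p1 - p2)) (p1 - p2)" using \<gamma> by (simp add: zero_le_divide_iff)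
  thus ?thesis by (simp add: inner_diff_left power2_norm_eq_inner)
qed

lemma prox_unique:
  fixes \<phi> :: "'a::euclidean_space \<Rightarrow> ereal"
  assumes g: "good_fun \<phi>" and \<gamma>: "\<gamma> > 0"
    and s: "(1 / \<gamma>) *\<^sub>R (z - p) \<in> subdiff \<phi> p"
  shows "prox \<gamma> \<phi> z = p"
proof -
  have cv: "convex_fun \<phi>" using g by (simp add: good_fun_def)
  have "(norm (prox \<gamma> \<phi> z - p))\<^sup>2 \<le> inner (z - z) (prox \<gamma> \<phi> z - p)"
    by (rule prox_nonexp_gen[OF cv \<gamma> prox_subdiff[OF g \<gamma>] s])
  thus ?thesis by simp
qed

lemma prox_nonexp:
  fixes \<phi> :: "'a::euclidean_space \<Rightarrow> ereal"
  assumes g: "good_fun \<phi>" and \<gamma>: "\<gamma> > 0"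
  shows "norm (prox \<gamma> \<phi> z1 - prox \<gamma> \<phi> z2) \<le> norm (z1 - z2)"
proof -
  have cv: "convex_fun \<phi>" using g by (simp add: good_fun_def)
  define p1 p2 where "p1 = prox \<gamma> \<phi> z1" and "p2 = prox \<gamma> \<phi> z2"
  have "(norm (p1 - p2))\<^sup>2 \<le> inner (z1 - z2) (p1 - p2)"
    unfolding p1_def p2_def by (rule prox_nonexp_gen[OF cv \<gamma> prox_subdiff[OF g \<gamma>] prox_subdiff[OF g \<gamma>]])
  also have "\<dots> \<le> norm (z1 - z2) * norm (p1 - p2)" by (rule norm_cauchy_schwarz)
  finally have "norm (p1 - p2) * norm (p1 - p2) \<le> norm (z1 - z2) * norm (p1 - p2)"
    by (simp add: power2_eq_square)
  hence "norm (p1 - p2) \<le> norm (z1 - z2)"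
  proof (cases "norm (p1 - p2) = 0")
    case False
    hence "0 < norm (p1 - p2)" by simp
    with \<open>norm (p1 - p2) * norm (p1 - p2) \<le> norm (z1 - z2) * norm (p1 - p2)\<close> show ?thesis
      by (rule mult_right_le_imp_le)
  qed simp
  thus ?thesis unfolding p1_def p2_def .
qed

lemma prox_continuous:
  fixes \<phi> :: "'a::euclidean_space \<Rightarrow> ereal"
  assumes g: "good_fun \<phi>" and \<gamma>: "\<gamma> > 0"
  shows "continuous_on UNIV (prox \<gamma> \<phi>)"
proof -
  have "lipschitz_on 1 UNIV (prox \<gamma> \<phi>)"
    by (rule lipschitz_onI) (auto simp: dist_norm prox_nonexp[OF g \<gamma>])
  thus ?thesis by (rule lipschitz_on_continuous_on)
qed

lemma key_ineq:
  fixes Xz a e b :: "'a::real_inner"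
    and \<gamma> \<omega> \<mu>g \<mu>h :: real
  defines "w1 \<equiv> 1 + \<omega>"
  defines "gp \<equiv> \<gamma> * w1"
  defines "D \<equiv> gp + 2 * \<mu>h"
  defines "C2 \<equiv> w1 * D"
  defines "r \<equiv> gp *\<^sub>R (b - e)"
  assumes \<gamma>: "\<gamma> > 0" and \<omega>: "\<omega> \<ge> 0" and \<mu>g: "\<mu>g \<ge> 0" and \<mu>h: "\<mu>h \<ge> 0"
    and G: "\<gamma> * \<mu>g * (norm a)\<^sup>2 \<le> inner (Xz - a) a - \<gamma> * inner e a"
    and H: "\<mu>h * (norm b)\<^sup>2 \<le> inner (a - gp *\<^sub>R (b - e)) b"
  shows "(1 / \<gamma>) * (norm (a - (1 / w1) *\<^sub>R r))\<^sup>2 + C2 * (norm (e + (1 / (gp * w1)) *\<^sub>R r))\<^sup>2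
         + \<omega> * (1 / (\<gamma> * w1\<^sup>2) + C2 / (gp\<^sup>2 * w1\<^sup>2)) * (norm r)\<^sup>2
       \<le> (1 / (1 + \<gamma> * \<mu>g)) * ((1 / \<gamma>) * (norm Xz)\<^sup>2)
         + (1 - 2 * (1 / gp) * \<mu>h / (w1 * (1 + 2 * (1 / gp) * \<mu>h))) * (C2 * (norm e)\<^sup>2)"
proof -
  define aa ab ae bb be ee Xa XX where
    "aa = inner a a" and "ab = inner a b" and "ae = inner a e" and "bb = inner b b"
    and "be = inner b e" and "ee = inner e e" and "Xa = inner Xz a" and "XX = inner Xz Xz"
  have w1: "w1 \<ge> 1" using \<omega> by (simp add: w1_def)
  have gp: "gp > 0" using \<gamma> w1 by (simp add: gp_def)
  have D: "D > 0" using gp \<mu>h by (simp add: D_def)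
  have v1: "(1 / w1) *\<^sub>R r = \<gamma> *\<^sub>R (b - e)" using w1 by (simp add: r_def gp_def)
  have v2: "(1 / (gp * w1)) *\<^sub>R r = (1 / w1) *\<^sub>R (b - e)" using gp w1 by (simp add: r_def)
  have nd: "(norm (x - c *\<^sub>R y))\<^sup>2 = inner x x - 2 * c * inner x y + c\<^sup>2 * inner y y" for x y :: 'a and c
    unfolding power2_norm_eq_inner by (simp add: inner_diff_left inner_diff_right inner_commute power2_eq_square)
  have na: "(norm (x + c *\<^sub>R y))\<^sup>2 = inner x x + 2 * c * inner x y + c\<^sup>2 * inner y y" for x y :: 'a and c
    unfolding power2_norm_eq_inner by (simp add: inner_add_left inner_add_right inner_commute power2_eq_square)
  have i1: "inner a (b - e) = ab - ae" "inner e (b - e) = be - ee" "inner (b - e) (b - e) = bb - 2 * be + ee"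
    by (simp_all add: ab_def ae_def be_def ee_def bb_def inner_diff_left inner_diff_right inner_commute)
  have n1: "(norm (a - (1 / w1) *\<^sub>R r))\<^sup>2 = aa - 2 * \<gamma> * (ab - ae) + \<gamma>\<^sup>2 * (bb - 2 * be + ee)"
    unfolding v1 nd i1 aa_def by simp
  have n2: "(norm (e + (1 / (gp * w1)) *\<^sub>R r))\<^sup>2 = ee + 2 * (1 / w1) * (be - ee) + (1 / w1)\<^sup>2 * (bb - 2 * be + ee)"
    unfolding v2 na i1 ee_def by simp
  have n3: "(norm r)\<^sup>2 = gp\<^sup>2 * (bb - 2 * be + ee)"
    unfolding r_def norm_scaleR power_mult_distrib power2_norm_eq_inner i1 by simp
  have L0: "(1 / \<gamma>) * (norm (a - (1 / w1) *\<^sub>R r))\<^sup>2 + C2 * (norm (e + (1 / (gp * w1)) *\<^sub>R r))\<^sup>2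
         + \<omega> * (1 / (\<gamma> * w1\<^sup>2) + C2 / (gp\<^sup>2 * w1\<^sup>2)) * (norm r)\<^sup>2
         = (1 / \<gamma>) * (aa - 2 * \<gamma> * (ab - ae) + \<gamma>\<^sup>2 * (bb - 2 * be + ee))
           + (w1 * D) * (ee + 2 * (1 / w1) * (be - ee) + (1 / w1)\<^sup>2 * (bb - 2 * be + ee))
           + (w1 - 1) * (1 / (\<gamma> * w1\<^sup>2) + (w1 * D) / ((\<gamma> * w1)\<^sup>2 * w1\<^sup>2)) * ((\<gamma> * w1)\<^sup>2 * (bb - 2 * be + ee))"
    unfolding n1 n2 n3 by (simp add: C2_def gp_def w1_def)
  have w1p: "w1 > 0" using w1 by simp
  have L1: "(1 / \<gamma>) * (aa - 2 * \<gamma> * (ab - ae) + \<gamma>\<^sup>2 * (bb - 2 * be + ee))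
           + (w1 * D) * (ee + 2 * (1 / w1) * (be - ee) + (1 / w1)\<^sup>2 * (bb - 2 * be + ee))
           + (w1 - 1) * (1 / (\<gamma> * w1\<^sup>2) + (w1 * D) / ((\<gamma> * w1)\<^sup>2 * w1\<^sup>2)) * ((\<gamma> * w1)\<^sup>2 * (bb - 2 * be + ee))
         = aa / \<gamma> - 2 * ab + 2 * ae + (\<gamma> * w1) * (bb - 2 * be + ee) + (w1 - 1) * D * ee + D * bb"
    using \<gamma> w1p by (simp add: field_simps power2_eq_square)
  have L: "(1 / \<gamma>) * (norm (a - (1 / w1) *\<^sub>R r))\<^sup>2 + C2 * (norm (e + (1 / (gp * w1)) *\<^sub>R r))\<^sup>2
         + \<omega> * (1 / (\<gamma> * w1\<^sup>2) + C2 / (gp\<^sup>2 * w1\<^sup>2)) * (norm r)\<^sup>2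
         = aa / \<gamma> - 2 * ab + 2 * ae + gp * (bb - 2 * be + ee) + \<omega> * D * ee + D * bb"
    unfolding L0 L1 by (simp add: gp_def w1_def)
  have H': "\<mu>h * bb \<le> ab - gp * bb + gp * be"
    using H unfolding power2_norm_eq_inner bb_def ab_def be_def
    by (simp add: inner_diff_left inner_diff_right inner_commute algebra_simps)
  have G': "\<gamma> * \<mu>g * aa \<le> Xa - aa - \<gamma> * ae"
    using G unfolding power2_norm_eq_inner aa_def Xa_def ae_def
    by (simp add: inner_diff_left inner_diff_right inner_commute algebra_simps)
  define k where "k = 1 + 2 * \<gamma> * \<mu>g"
  have gmg: "\<gamma> * \<mu>g \<ge> 0" using \<gamma> \<mu>g by simp
  have k: "k \<ge> 1 + \<gamma> * \<mu>g" "1 + \<gamma> * \<mu>g > 0" using gmg by (auto simp: k_def)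
  have sq: "0 \<le> XX - 2 * k * Xa + k\<^sup>2 * aa"
  proof -
    have "0 \<le> inner (Xz - k *\<^sub>R a) (Xz - k *\<^sub>R a)" by simp
    thus ?thesis unfolding XX_def Xa_def aa_def
      by (simp add: inner_diff_left inner_diff_right inner_commute power2_eq_square algebra_simps)
  qed
  have step2: "aa / \<gamma> - 2 * ab + 2 * ae + gp * (bb - 2 * be + ee) + \<omega> * D * ee + D * bb
      \<le> aa / \<gamma> + 2 * ae + gp * ee + \<omega> * D * ee"
    using H' unfolding D_def by (simp add: algebra_simps)
  have ae_b: "\<gamma> * (2 * ae) \<le> 2 * Xa - 2 * aa - 2 * \<gamma> * \<mu>g * aa" using G' by simp
  have s3: "aa / \<gamma> + 2 * ae \<le> (1 / \<gamma>) * (2 * Xa - k * aa)"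
  proof -
    have "aa + \<gamma> * (2 * ae) \<le> 2 * Xa - k * aa" using ae_b by (simp add: k_def algebra_simps)
    hence "(aa + \<gamma> * (2 * ae)) / \<gamma> \<le> (2 * Xa - k * aa) / \<gamma>" using \<gamma> by (simp add: divide_right_mono)
    thus ?thesis using \<gamma> by (simp add: field_simps)
  qed
  have kpos: "k > 0" using k by linarith
  have s4: "2 * Xa - k * aa \<le> XX / k"
  proof -
    have "k * (2 * Xa - k * aa) \<le> XX" using sq by (simp add: power2_eq_square algebra_simps)
    thus ?thesis using kpos by (simp add: field_simps)
  qed
  have XXz: "XX \<ge> 0" unfolding XX_def by simp
  have s5: "XX / k \<le> XX / (1 + \<gamma> * \<mu>g)"
    using XXz k by (intro divide_left_mono) auto
  have s6: "(1 / \<gamma>) * (2 * Xa - k * aa) \<le> (1 / (1 + \<gamma> * \<mu>g)) * ((1 / \<gamma>) * XX)"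
  proof -
    have "2 * Xa - k * aa \<le> XX / (1 + \<gamma> * \<mu>g)" using s4 s5 by linarith
    hence "(1 / \<gamma>) * (2 * Xa - k * aa) \<le> (1 / \<gamma>) * (XX / (1 + \<gamma> * \<mu>g))" using \<gamma> by (intro mult_left_mono) auto
    thus ?thesis by (simp add: mult.commute)
  qed
  have f1: "2 * (1 / gp) * \<mu>h / (w1 * (1 + 2 * (1 / gp) * \<mu>h)) = 2 * \<mu>h / (w1 * D)"
    using gp w1p D by (simp add: D_def field_simps)
  have om: "\<omega> = w1 - 1" by (simp add: w1_def)
  have s7: "gp * ee + \<omega> * D * ee = (1 - 2 * (1 / gp) * \<mu>h / (w1 * (1 + 2 * (1 / gp) * \<mu>h))) * (C2 * ee)"
    unfolding f1 om C2_def using D w1p by (simp add: field_simps) (simp add: D_def algebra_simps)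
  have XXn: "(norm Xz)\<^sup>2 = XX" "(norm e)\<^sup>2 = ee" by (simp_all add: XX_def ee_def power2_norm_eq_inner)
  show ?thesis unfolding XXn using L step2 s3 s6 s7 by linarith
qed


lemma kkt_setup:
  fixes g h :: "'a::euclidean_space \<Rightarrow> ereal"
  assumes g: "proper_fun g" "closed_fun g" "convex_fun g"
    and h: "proper_fun h" "closed_fun h" "convex_fun h"
    and sc_g: "strongly_convex_fun \<mu>g g"
    and sc_hs: "strongly_convex_fun \<mu>hs (conj_fun h)"
    and pos: "\<mu>g > 0" "\<mu>hs > 0"
    and kkt: "\<exists>x u. - u \<in> subdiff g x \<and> x \<in> subdiff (conj_fun h) u"
    and primal_sol: "\<forall>x. g xs + h xs \<le> g x + h x"
    and dual_sol: "\<forall>u. conj_fun g (- us) + conj_fun h us \<le> conj_fun g (- u) + conj_fun h u"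
  shows "good_fun g" "good_fun h" "- us \<in> subdiff g xs" "xs \<in> subdiff (conj_fun h) us"
proof -
  obtain x' u' where k1: "- u' \<in> subdiff g x'" and k2: "x' \<in> subdiff (conj_fun h) u'"
    using kkt by blast
  obtain gx where gx: "g x' = ereal gx" and gle: "\<And>y. ereal (gx + inner (- u') (y - x')) \<le> g y"
    using subdiffD[OF k1] by blast
  show gg: "good_fun g"
    unfolding good_fun_def
  proof (intro conjI exI allI)
    show "convex_fun g" "closed_fun g" by (fact g(3)) (fact g(2))
    show "g x' < \<infinity>" by (simp add: gx)
    fix y show "ereal (inner (- u') y + (gx + inner u' x')) \<le> g y"
      using gle[of y] by (simp add: inner_diff_right algebra_simps)
  qed
  obtain ch where ch: "conj_fun h u' = ereal ch" using subdiffD[OF k2] by blast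
  have hle: "ereal (inner u' y + (- ch)) \<le> h y" for y
  proof -
    have "ereal (inner u' y) - h y \<le> conj_fun h u'" unfolding conj_fun_def by (rule SUP_upper) simp
    hence le: "ereal (inner u' y) - h y \<le> ereal ch" by (simp add: ch)
    show ?thesis
    proof (cases "h y")
      case (real r) with le show ?thesis by simp
    next
      case PInf thus ?thesis by simp
    next
      case MInf with h(1) show ?thesis by (auto simp: proper_fun_def)
    qed
  qed
  have hy0: "\<exists>y0. h y0 < \<infinity>" using h(1) by (auto simp: proper_fun_def)
  show gh: "good_fun h"
    unfolding good_fun_def using h(2,3) hy0 hle by blast
  define p where "p = prox 1 h (x' + u')"
  have "(1 / 1) *\<^sub>R (x' + u' - p) \<in> subdiff h p" unfolding p_def by (rule prox_subdiff[OF gh]) simp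
  hence s1: "x' + u' - p \<in> subdiff h p" by simp
  have s2: "p \<in> subdiff (conj_fun h) (x' + u' - p)" by (rule subdiff_conj[OF s1])
  have "\<mu>hs * (norm ((x' + u' - p) - u'))\<^sup>2 \<le> inner (p - x') ((x' + u' - p) - u')"
    by (rule subdiff_strong_mono[OF sc_hs s2 k2])
  also have "\<dots> = - (norm (x' - p))\<^sup>2"
    by (simp add: power2_norm_eq_inner inner_diff_left inner_diff_right inner_commute)
  finally have "\<mu>hs * (norm (x' - p))\<^sup>2 + (norm (x' - p))\<^sup>2 \<le> 0" by simp
  moreover have "0 \<le> \<mu>hs * (norm (x' - p))\<^sup>2" using pos by simp
  ultimately have "(norm (x' - p))\<^sup>2 \<le> 0" by linarith
  hence "x' = p" by simp
  hence k3: "u' \<in> subdiff h x'" using s1 by simp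
  obtain hx where hx: "h x' = ereal hx" and hle2: "\<And>y. ereal (hx + inner u' (y - x')) \<le> h y"
    using subdiffD[OF k3] by blast
  have xs_eq: "xs = x'"
  proof -
    have a: "ereal (gx + inner (- u') (xs - x') + \<mu>g / 2 * (norm (xs - x'))\<^sup>2) \<le> g xs"
      by (rule subdiff_strong[OF sc_g k1 gx])
    have b: "ereal (hx + inner u' (xs - x')) \<le> h xs" by (rule hle2)
    have "ereal (gx + inner (- u') (xs - x') + \<mu>g / 2 * (norm (xs - x'))\<^sup>2) + ereal (hx + inner u' (xs - x'))
          \<le> g xs + h xs" by (rule add_mono[OF a b])
    also have "\<dots> \<le> g x' + h x'" using primal_sol by blast
    finally have "gx + hx + \<mu>g / 2 * (norm (xs - x'))\<^sup>2 \<le> gx + hx"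
      by (simp add: gx hx)
    hence "\<mu>g * (norm (xs - x'))\<^sup>2 \<le> 0" by simp
    hence "(norm (xs - x'))\<^sup>2 \<le> 0" using pos by (simp add: mult_le_0_iff)
    thus ?thesis by simp
  qed
  have k4: "x' \<in> subdiff (conj_fun g) (- u')" by (rule subdiff_conj[OF k1])
  obtain cg where cg: "conj_fun g (- u') = ereal cg" and cgle: "\<And>v. ereal (cg + inner x' (v - (- u'))) \<le> conj_fun g v"
    using subdiffD[OF k4] by blast
  have us_eq: "us = u'"
  proof -
    have a: "ereal (cg + inner x' (- us - (- u'))) \<le> conj_fun g (- us)" by (rule cgle)
    have b: "ereal (ch + inner x' (us - u') + \<mu>hs / 2 * (norm (us - u'))\<^sup>2) \<le> conj_fun h us"
      by (rule subdiff_strong[OF sc_hs k2 ch])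
    have "ereal (cg + inner x' (- us - (- u'))) + ereal (ch + inner x' (us - u') + \<mu>hs / 2 * (norm (us - u'))\<^sup>2)
          \<le> conj_fun g (- us) + conj_fun h us" by (rule add_mono[OF a b])
    also have "\<dots> \<le> conj_fun g (- u') + conj_fun h u'" using dual_sol by blast
    finally have "cg + inner x' (- us - (- u')) + (ch + inner x' (us - u') + \<mu>hs / 2 * (norm (us - u'))\<^sup>2) \<le> cg + ch"
      by (simp add: cg ch)
    moreover have "inner x' (- us - (- u')) + inner x' (us - u') = 0"
      by (simp add: inner_diff_right inner_minus_right)
    ultimately have "\<mu>hs * (norm (us - u'))\<^sup>2 \<le> 0" by linarith
    hence "(norm (us - u'))\<^sup>2 \<le> 0" using pos by (simp add: mult_le_0_iff)
    thus ?thesis by simp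
  qed
  show "- us \<in> subdiff g xs" using k1 xs_eq us_eq by simp
  show "xs \<in> subdiff (conj_fun h) us" using k2 xs_eq us_eq by simp
qed

lemma det_step:
  fixes g h :: "'a::euclidean_space \<Rightarrow> ereal"
  assumes gg: "good_fun g" and gh: "good_fun h"
    and sc_g: "strongly_convex_fun \<mu>g g"
    and sc_hs: "strongly_convex_fun \<mu>hs (conj_fun h)"
    and \<gamma>: "\<gamma> > 0" and \<omega>: "\<omega> \<ge> 0" and \<mu>g: "\<mu>g \<ge> 0" and \<mu>hs: "\<mu>hs \<ge> 0"
    and k1: "- us \<in> subdiff g xs" and k2: "xs \<in> subdiff (conj_fun h) us"
  shows "(1 / \<gamma>) * (norm ((rp_xhat \<gamma> g x u - xs) - (1 / (1 + \<omega>)) *\<^sub>R rp_res \<gamma> \<omega> g h x u))\<^sup>2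
       + ((1 + \<omega>) * (\<gamma> * (1 + \<omega>) + 2 * \<mu>hs))
          * (norm ((u - us) + (1 / (\<gamma> * (1 + \<omega>) * (1 + \<omega>))) *\<^sub>R rp_res \<gamma> \<omega> g h x u))\<^sup>2
       + \<omega> * (1 / (\<gamma> * (1 + \<omega>)\<^sup>2) + ((1 + \<omega>) * (\<gamma> * (1 + \<omega>) + 2 * \<mu>hs)) / ((\<gamma> * (1 + \<omega>))\<^sup>2 * (1 + \<omega>)\<^sup>2))
          * (norm (rp_res \<gamma> \<omega> g h x u))\<^sup>2
     \<le> (1 / (1 + \<gamma> * \<mu>g)) * ((1 / \<gamma>) * (norm (x - xs))\<^sup>2)
       + (1 - 2 * (1 / (\<gamma> * (1 + \<omega>))) * \<mu>hs / ((1 + \<omega>) * (1 + 2 * (1 / (\<gamma> * (1 + \<omega>))) * \<mu>hs)))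
          * (((1 + \<omega>) * (\<gamma> * (1 + \<omega>) + 2 * \<mu>hs)) * (norm (u - us))\<^sup>2)"
proof -
  define xh where "xh = rp_xhat \<gamma> g x u"
  define gp where "gp = \<gamma> * (1 + \<omega>)"
  have gp: "gp > 0" using \<gamma> \<omega> by (simp add: gp_def)
  define p where "p = prox gp h (xh + gp *\<^sub>R u)"
  define r where "r = rp_res \<gamma> \<omega> g h x u"
  have r_eq: "r = xh - p" by (simp add: r_def rp_res_def xh_def p_def gp_def)
  have sg: "(1 / \<gamma>) *\<^sub>R ((x - \<gamma> *\<^sub>R u) - xh) \<in> subdiff g xh"
    unfolding xh_def rp_xhat_def by (rule prox_subdiff[OF gg \<gamma>])
  have sh: "(1 / gp) *\<^sub>R ((xh + gp *\<^sub>R u) - p) \<in> subdiff h p"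
    unfolding p_def by (rule prox_subdiff[OF gh gp])
  define w where "w = u + (1 / gp) *\<^sub>R r"
  have w_eq: "(1 / gp) *\<^sub>R ((xh + gp *\<^sub>R u) - p) = w"
    using gp by (simp add: w_def r_eq scaleR_diff_right scaleR_add_right algebra_simps)
  have sh2: "p \<in> subdiff (conj_fun h) w" using subdiff_conj[OF sh] w_eq by simp
  define X0 a e b where "X0 = x - xs" and "a = xh - xs" and "e = u - us" and "b = w - us"
  have G0: "\<mu>g * (norm (xh - xs))\<^sup>2 \<le> inner ((1 / \<gamma>) *\<^sub>R ((x - \<gamma> *\<^sub>R u) - xh) - (- us)) (xh - xs)"
    by (rule subdiff_strong_mono[OF sc_g sg k1])
  have "(1 / \<gamma>) *\<^sub>R ((x - \<gamma> *\<^sub>R u) - xh) - (- us) = (1 / \<gamma>) *\<^sub>R (X0 - a) - e"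
    using \<gamma> by (simp add: X0_def a_def e_def algebra_simps)
  hence "\<mu>g * (norm a)\<^sup>2 \<le> (1 / \<gamma>) * inner (X0 - a) a - inner e a"
    using G0 by (simp add: a_def inner_diff_left)
  hence "\<gamma> * (\<mu>g * (norm a)\<^sup>2) \<le> \<gamma> * ((1 / \<gamma>) * inner (X0 - a) a - inner e a)"
    using \<gamma> by (intro mult_left_mono) auto
  hence G: "\<gamma> * \<mu>g * (norm a)\<^sup>2 \<le> inner (X0 - a) a - \<gamma> * inner e a"
    using \<gamma> by (simp add: algebra_simps)
  have H0: "\<mu>hs * (norm (w - us))\<^sup>2 \<le> inner (p - xs) (w - us)"
    by (rule subdiff_strong_mono[OF sc_hs sh2 k2])
  have bme: "b - e = (1 / gp) *\<^sub>R r" by (simp add: b_def e_def w_def)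
  have rr: "gp *\<^sub>R (b - e) = r" using gp by (simp add: bme)
  have "p - xs = a - gp *\<^sub>R (b - e)" unfolding rr by (simp add: a_def r_eq)
  hence H: "\<mu>hs * (norm b)\<^sup>2 \<le> inner (a - gp *\<^sub>R (b - e)) b" using H0 by (simp add: b_def)
  have H': "\<mu>hs * (norm b)\<^sup>2 \<le> inner (a - (\<gamma> * (1 + \<omega>)) *\<^sub>R (b - e)) b" using H by (simp add: gp_def)
  have rr2: "(\<gamma> * (1 + \<omega>)) *\<^sub>R (b - e) = rp_res \<gamma> \<omega> g h x u" using rr by (simp add: gp_def r_def)
  note K = key_ineq[where Xz=X0 and a=a and e=e and b=b and \<gamma>=\<gamma> and \<omega>=\<omega> and \<mu>g=\<mu>g and \<mu>h=\<mu>hs, OF \<gamma> \<omega> \<mu>g \<mu>hs G H']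
  note K2 = K[unfolded rr2]
  show ?thesis using K2 unfolding a_def X0_def e_def xh_def .
qed

lemma exp_step:
  fixes M F :: "'s measure" and Pa Pb Q :: "'s \<Rightarrow> real" and V d r :: "'s \<Rightarrow> 'a::euclidean_space"
  assumes M: "prob_space M" and sub: "subalgebra M F"
    and mPa: "Pa \<in> borel_measurable M" and mQ: "Q \<in> borel_measurable M"
    and mV: "V \<in> borel_measurable F" and mr: "r \<in> borel_measurable F"
    and intd: "integrable M d"
    and dec: "\<And>s. s \<in> space M \<Longrightarrow> Pb s = Q s + inner (V s) (d s - r s) + \<kappa> * (norm (d s - r s))\<^sup>2"
    and bnd: "\<And>s. s \<in> space M \<Longrightarrow> Q s + \<kappa> * \<omega> * (norm (r s))\<^sup>2 \<le> c * Pa s"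
    and Q0: "\<And>s. s \<in> space M \<Longrightarrow> 0 \<le> Q s"
    and Vb: "\<And>s. s \<in> space M \<Longrightarrow> (norm (V s))\<^sup>2 \<le> Cv * Q s"
    and \<kappa>: "\<kappa> > 0" and \<omega>: "\<omega> \<ge> 0" and c: "c \<ge> 0" and Cv: "Cv \<ge> 0"
    and Pai: "integrable M Pa"
    and unb: "\<And>v. AE s in M. real_cond_exp M F (\<lambda>s. inner (d s) v) s = inner (r s) v"
    and var: "AE s in M. nn_cond_exp M F (\<lambda>s. ennreal ((norm (d s - r s))\<^sup>2)) s \<le> ennreal (\<omega> * (norm (r s))\<^sup>2)"
  shows "integrable M Pb" "integral\<^sup>L M Pb \<le> c * integral\<^sup>L M Pa"
proof -
  interpret prob_space M by (rule M)
  interpret fms: finite_measure_subalgebra M F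
    by (rule finite_measure_subalgebra.intro[OF finite_measure_axioms]) (unfold_locales, rule sub)
  have mV' [measurable]: "V \<in> borel_measurable M" by (rule measurable_from_subalg[OF sub mV])
  have mr' [measurable]: "r \<in> borel_measurable M" by (rule measurable_from_subalg[OF sub mr])
  have md [measurable]: "d \<in> borel_measurable M" using intd by (rule borel_measurable_integrable)
  note [measurable] = mPa mQ
  define dl where "dl s = d s - r s" for s
  have mdl [measurable]: "dl \<in> borel_measurable M" unfolding dl_def by measurable
  have r_bd: "\<omega> * (norm (r s))\<^sup>2 \<le> (c / \<kappa>) * Pa s" if "s \<in> space M" for s
  proof -
    have "\<kappa> * (\<omega> * (norm (r s))\<^sup>2) \<le> c * Pa s" using bnd[OF that] Q0[OF that] by (simp add: algebra_simps)
    hence "\<omega> * (norm (r s))\<^sup>2 \<le> (c * Pa s) / \<kappa>" using \<kappa> by (simp add: pos_le_divide_eq mult_ac)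
    thus ?thesis by simp
  qed
  have Pa_int2: "integrable M (\<lambda>s. (c / \<kappa>) * Pa s)" using Pai by simp
  have ri: "integrable M (\<lambda>s. \<omega> * (norm (r s))\<^sup>2)"
  proof (rule Bochner_Integration.integrable_bound[OF Pa_int2])
    show "(\<lambda>s. \<omega> * (norm (r s))\<^sup>2) \<in> borel_measurable M" by measurable
    show "AE s in M. norm (\<omega> * (norm (r s))\<^sup>2) \<le> norm ((c / \<kappa>) * Pa s)"
    proof (intro AE_I2 impI)
      fix s assume s: "s \<in> space M"
      have a: "\<omega> * (norm (r s))\<^sup>2 \<le> (c / \<kappa>) * Pa s" by (rule r_bd[OF s])
      have b: "0 \<le> \<omega> * (norm (r s))\<^sup>2" using \<omega> by simp
      show "norm (\<omega> * (norm (r s))\<^sup>2) \<le> norm ((c / \<kappa>) * Pa s)"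
        unfolding real_norm_def using a b abs_ge_self[of "(c / \<kappa>) * Pa s"] by linarith
    qed
  qed
  have var_int: "(\<integral>\<^sup>+ s. ennreal ((norm (dl s))\<^sup>2) \<partial>M) \<le> (\<integral>\<^sup>+ s. ennreal (\<omega> * (norm (r s))\<^sup>2) \<partial>M)"
  proof -
    have "(\<integral>\<^sup>+ s. ennreal ((norm (dl s))\<^sup>2) \<partial>M) = (\<integral>\<^sup>+ s. 1 * ennreal ((norm (dl s))\<^sup>2) \<partial>M)" by simp
    also have "\<dots> = (\<integral>\<^sup>+ s. 1 * nn_cond_exp M F (\<lambda>s. ennreal ((norm (dl s))\<^sup>2)) s \<partial>M)"
      by (rule fms.nn_cond_exp_intg[symmetric]) auto
    also have "\<dots> \<le> (\<integral>\<^sup>+ s. ennreal (\<omega> * (norm (r s))\<^sup>2) \<partial>M)"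
      using var unfolding dl_def by (intro nn_integral_mono_AE) auto
    finally show ?thesis .
  qed
  have fin: "(\<integral>\<^sup>+ s. ennreal ((norm (dl s))\<^sup>2) \<partial>M) < \<infinity>"
  proof -
    have "(\<integral>\<^sup>+ s. ennreal (\<omega> * (norm (r s))\<^sup>2) \<partial>M) = ennreal (integral\<^sup>L M (\<lambda>s. \<omega> * (norm (r s))\<^sup>2))"
      using ri \<omega> by (intro nn_integral_eq_integral) auto
    hence "(\<integral>\<^sup>+ s. ennreal ((norm (dl s))\<^sup>2) \<partial>M) \<le> ennreal (integral\<^sup>L M (\<lambda>s. \<omega> * (norm (r s))\<^sup>2))"
      using var_int by simp
    thus ?thesis unfolding infinity_ennreal_def using ennreal_less_top by (rule le_less_trans)
  qed
  have dl2i: "integrable M (\<lambda>s. (norm (dl s))\<^sup>2)"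
    by (rule integrableI_nonneg) (use fin in auto)
  have dl_le: "integral\<^sup>L M (\<lambda>s. (norm (dl s))\<^sup>2) \<le> integral\<^sup>L M (\<lambda>s. \<omega> * (norm (r s))\<^sup>2)"
  proof -
    have "ennreal (integral\<^sup>L M (\<lambda>s. (norm (dl s))\<^sup>2)) = (\<integral>\<^sup>+ s. ennreal ((norm (dl s))\<^sup>2) \<partial>M)"
      using dl2i by (intro nn_integral_eq_integral[symmetric]) auto
    also have "\<dots> \<le> (\<integral>\<^sup>+ s. ennreal (\<omega> * (norm (r s))\<^sup>2) \<partial>M)" by (rule var_int)
    also have "\<dots> = ennreal (integral\<^sup>L M (\<lambda>s. \<omega> * (norm (r s))\<^sup>2))"
      using ri \<omega> by (intro nn_integral_eq_integral) auto
    finally show ?thesis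
      using \<omega> by (subst (asm) ennreal_le_iff) (auto intro!: integral_nonneg_AE)
  qed
  have dli: "integrable M dl"
  proof (rule Bochner_Integration.integrable_bound)
    show "integrable M (\<lambda>s. 1 + (norm (dl s))\<^sup>2)" using dl2i by simp
    show "dl \<in> borel_measurable M" by (rule mdl)
    show "AE s in M. norm (dl s) \<le> norm (1 + (norm (dl s))\<^sup>2)"
    proof (intro AE_I2)
      fix s
      have "0 \<le> (norm (dl s) - 1/2)\<^sup>2" by simp
      hence "norm (dl s) \<le> 1 + (norm (dl s))\<^sup>2" by (simp add: power2_diff power2_eq_square algebra_simps)
      thus "norm (dl s) \<le> norm (1 + (norm (dl s))\<^sup>2)" by simp
    qed
  qed
  have rint: "integrable M r"
  proof -
    have "integrable M (\<lambda>s. d s - dl s)" using intd dli by simp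
    moreover have "\<And>s. d s - dl s = r s" by (simp add: dl_def)
    ultimately show ?thesis by simp
  qed
  have unb0: "AE s in M. real_cond_exp M F (\<lambda>s. inner (dl s) v) s = 0" for v
  proof -
    have i1: "integrable M (\<lambda>s. inner (d s) v)" using intd by simp
    have i2: "integrable M (\<lambda>s. inner (r s) v)" using rint by simp
    have m2: "(\<lambda>s. inner (r s) v) \<in> borel_measurable F" using mr by measurable
    have e1: "AE s in M. real_cond_exp M F (\<lambda>s. inner (d s) v - inner (r s) v) s
               = real_cond_exp M F (\<lambda>s. inner (d s) v) s - real_cond_exp M F (\<lambda>s. inner (r s) v) s"
      by (rule fms.real_cond_exp_diff[OF i1 i2])
    have e2: "AE s in M. real_cond_exp M F (\<lambda>s. inner (r s) v) s = inner (r s) v"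
      by (rule fms.real_cond_exp_F_meas[OF i2 m2])
    have eqf: "(\<lambda>s. inner (dl s) v) = (\<lambda>s. inner (d s) v - inner (r s) v)"
      by (simp add: dl_def inner_diff_left)
    show ?thesis unfolding eqf using e1 e2 unb[of v] by eventually_elim simp
  qed
  have Qi: "integrable M Q"
  proof (rule Bochner_Integration.integrable_bound[OF Pai[THEN integrable_mult_right[of c]]])
    show "Q \<in> borel_measurable M" by (rule mQ)
    show "AE s in M. norm (Q s) \<le> norm (c * Pa s)"
    proof (intro AE_I2 impI)
      fix s assume s: "s \<in> space M"
      have "0 \<le> \<kappa> * \<omega> * (norm (r s))\<^sup>2" using \<kappa> \<omega> by simp
      hence "Q s \<le> c * Pa s" using bnd[OF s] by linarith
      thus "norm (Q s) \<le> norm (c * Pa s)" using Q0[OF s] by simp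
    qed
  qed
  have V2i: "integrable M (\<lambda>s. (norm (V s))\<^sup>2)"
  proof (rule Bochner_Integration.integrable_bound[OF Qi[THEN integrable_mult_right[of Cv]]])
    show "(\<lambda>s. (norm (V s))\<^sup>2) \<in> borel_measurable M" by measurable
    show "AE s in M. norm ((norm (V s))\<^sup>2) \<le> norm (Cv * Q s)"
    proof (intro AE_I2 impI)
      fix s assume s: "s \<in> space M"
      have a: "(norm (V s))\<^sup>2 \<le> Cv * Q s" by (rule Vb[OF s])
      show "norm ((norm (V s))\<^sup>2) \<le> norm (Cv * Q s)"
        unfolding real_norm_def using a abs_ge_self[of "Cv * Q s"] by simp
    qed
  qed
  have prod_bd: "\<bar>x * y\<bar> \<le> (norm a)\<^sup>2 + (norm b)\<^sup>2" if "\<bar>x\<bar> \<le> norm a" "\<bar>y\<bar> \<le> norm b" for x y :: real and a b :: 'a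
  proof -
    have "\<bar>x * y\<bar> \<le> norm a * norm b" unfolding abs_mult using that by (intro mult_mono) auto
    also have "\<dots> \<le> (norm a)\<^sup>2 + (norm b)\<^sup>2"
    proof -
      have "0 \<le> (norm a - norm b)\<^sup>2" by simp
      hence "2 * (norm a * norm b) \<le> (norm a)\<^sup>2 + (norm b)\<^sup>2" by (simp add: power2_diff algebra_simps)
      moreover have "0 \<le> norm a * norm b" by simp
      ultimately show ?thesis by linarith
    qed
    finally show ?thesis .
  qed
  have compi: "integrable M (\<lambda>s. inner (V s) i * inner (dl s) i)" if i: "i \<in> Basis" for i
  proof (rule Bochner_Integration.integrable_bound[OF Bochner_Integration.integrable_add[OF V2i dl2i]])
    show "(\<lambda>s. inner (V s) i * inner (dl s) i) \<in> borel_measurable M" by measurable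
    show "AE s in M. norm (inner (V s) i * inner (dl s) i) \<le> norm ((norm (V s))\<^sup>2 + (norm (dl s))\<^sup>2)"
    proof (intro AE_I2)
      fix s
      have "\<bar>inner (V s) i\<bar> \<le> norm (V s)" using i by (simp add: Basis_le_norm)
      moreover have "\<bar>inner (dl s) i\<bar> \<le> norm (dl s)" using i by (simp add: Basis_le_norm)
      ultimately show "norm (inner (V s) i * inner (dl s) i) \<le> norm ((norm (V s))\<^sup>2 + (norm (dl s))\<^sup>2)"
        using prod_bd by fastforce
    qed
  qed
  have comp0: "integral\<^sup>L M (\<lambda>s. inner (V s) i * inner (dl s) i) = 0" if i: "i \<in> Basis" for i
  proof -
    have mVi: "(\<lambda>s. inner (V s) i) \<in> borel_measurable F" using mV by measurable
    have mdli: "(\<lambda>s. inner (dl s) i) \<in> borel_measurable M" by measurable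
    have "integral\<^sup>L M (\<lambda>s. inner (V s) i * inner (dl s) i)
          = integral\<^sup>L M (\<lambda>s. inner (V s) i * real_cond_exp M F (\<lambda>s. inner (dl s) i) s)"
      by (rule fms.real_cond_exp_intg(2)[symmetric, OF compi[OF i] mVi mdli])
    also have "\<dots> = integral\<^sup>L M (\<lambda>s. 0)"
      by (rule integral_cong_AE) (use unb0[of i] in \<open>auto elim!: eventually_mono\<close>)
    finally show ?thesis by simp
  qed
  have innV: "inner (V s) (dl s) = (\<Sum>i\<in>Basis. inner (V s) i * inner (dl s) i)" for s
    by (rule euclidean_inner)
  have Vdli: "integrable M (\<lambda>s. inner (V s) (dl s))"
    unfolding innV by (rule Bochner_Integration.integrable_sum) (rule compi)
  have Vdl0: "integral\<^sup>L M (\<lambda>s. inner (V s) (dl s)) = 0"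
    unfolding innV by (subst Bochner_Integration.integral_sum) (auto intro: compi simp: comp0)
  have Ri: "integrable M (\<lambda>s. Q s + inner (V s) (dl s) + \<kappa> * (norm (dl s))\<^sup>2)"
    using Qi Vdli dl2i by simp
  show Pbi: "integrable M Pb"
  proof -
    have "integrable M Pb = integrable M (\<lambda>s. Q s + inner (V s) (dl s) + \<kappa> * (norm (dl s))\<^sup>2)"
      by (rule Bochner_Integration.integrable_cong[OF refl]) (simp add: dec dl_def)
    thus ?thesis using Ri by simp
  qed
  have "integral\<^sup>L M Pb = integral\<^sup>L M (\<lambda>s. Q s + inner (V s) (dl s) + \<kappa> * (norm (dl s))\<^sup>2)"
    by (rule Bochner_Integration.integral_cong[OF refl]) (simp add: dec dl_def)
  also have "\<dots> = integral\<^sup>L M Q + integral\<^sup>L M (\<lambda>s. inner (V s) (dl s)) + \<kappa> * integral\<^sup>L M (\<lambda>s. (norm (dl s))\<^sup>2)"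
    using Qi Vdli dl2i by simp
  also have "\<dots> \<le> integral\<^sup>L M Q + \<kappa> * integral\<^sup>L M (\<lambda>s. \<omega> * (norm (r s))\<^sup>2)"
    using Vdl0 dl_le \<kappa> by (simp add: mult_left_mono)
  also have "\<dots> = integral\<^sup>L M (\<lambda>s. Q s + \<kappa> * \<omega> * (norm (r s))\<^sup>2)"
    using Qi ri by (simp add: mult.assoc)
  also have "\<dots> \<le> integral\<^sup>L M (\<lambda>s. c * Pa s)"
  proof (rule Bochner_Integration.integral_mono)
    show "integrable M (\<lambda>s. Q s + \<kappa> * \<omega> * (norm (r s))\<^sup>2)"
      using Qi ri by (simp add: mult.assoc)
    show "integrable M (\<lambda>s. c * Pa s)" using Pai by simp
    show "Q s + \<kappa> * \<omega> * (norm (r s))\<^sup>2 \<le> c * Pa s" if "s \<in> space M" for s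
      by (rule bnd[OF that])
  qed
  also have "\<dots> = c * integral\<^sup>L M Pa" by simp
  finally show "integral\<^sup>L M Pb \<le> c * integral\<^sup>L M Pa" .
qed

lemma rp_x_0: "rp_x \<gamma> \<omega> g h R x0 u0 0 s = x0" by (simp add: rp_x_def)
lemma rp_u_0: "rp_u \<gamma> \<omega> g h R x0 u0 0 s = u0" by (simp add: rp_u_def)
lemma rp_x_Suc: "rp_x \<gamma> \<omega> g h R x0 u0 (Suc t) s =
   rp_xhat \<gamma> g (rp_x \<gamma> \<omega> g h R x0 u0 t s) (rp_u \<gamma> \<omega> g h R x0 u0 t s)
   - (1 / (1 + \<omega>)) *\<^sub>R R t s (rp_res \<gamma> \<omega> g h (rp_x \<gamma> \<omega> g h R x0 u0 t s) (rp_u \<gamma> \<omega> g h R x0 u0 t s))"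
  by (simp add: rp_x_def rp_u_def Let_def split: prod.split)
lemma rp_u_Suc: "rp_u \<gamma> \<omega> g h R x0 u0 (Suc t) s =
   rp_u \<gamma> \<omega> g h R x0 u0 t s
   + (1 / (\<gamma> * (1 + \<omega>)\<^sup>2)) *\<^sub>R R t s (rp_res \<gamma> \<omega> g h (rp_x \<gamma> \<omega> g h R x0 u0 t s) (rp_u \<gamma> \<omega> g h R x0 u0 t s))"
  by (simp add: rp_x_def rp_u_def Let_def split: prod.split)

lemma xhat_cont:
  fixes g :: "'a::euclidean_space \<Rightarrow> ereal"
  assumes gg: "good_fun g" and \<gamma>: "\<gamma> > 0"
  shows "continuous_on UNIV (\<lambda>p. rp_xhat \<gamma> g (fst p) (snd p))"
  unfolding rp_xhat_def
  by (rule continuous_on_compose2[OF prox_continuous[OF gg \<gamma>]]) (auto intro!: continuous_intros)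

lemma res_cont:
  fixes g h :: "'a::euclidean_space \<Rightarrow> ereal"
  assumes gg: "good_fun g" and gh: "good_fun h" and \<gamma>: "\<gamma> > 0" and \<omega>: "\<omega> \<ge> 0"
  shows "continuous_on UNIV (\<lambda>p. rp_res \<gamma> \<omega> g h (fst p) (snd p))"
proof -
  have gp: "\<gamma> * (1 + \<omega>) > 0" using \<gamma> \<omega> by simp
  have c1: "continuous_on UNIV (\<lambda>p. rp_xhat \<gamma> g (fst p) (snd p))" by (rule xhat_cont[OF gg \<gamma>])
  have c2: "continuous_on UNIV (\<lambda>p. prox (\<gamma> * (1 + \<omega>)) h (rp_xhat \<gamma> g (fst p) (snd p) + (\<gamma> * (1 + \<omega>)) *\<^sub>R snd p))"
    by (rule continuous_on_compose2[OF prox_continuous[OF gh gp]]) (auto intro!: continuous_intros c1)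
  show ?thesis unfolding rp_res_def using c1 c2 by (intro continuous_intros)
qed

lemma decomp:
  fixes A B dl :: "'a::real_inner"
  shows "cA * (norm (A - kA *\<^sub>R dl))\<^sup>2 + cB * (norm (B + kB *\<^sub>R dl))\<^sup>2
       = (cA * (norm A)\<^sup>2 + cB * (norm B)\<^sup>2) + inner ((- (2 * cA * kA)) *\<^sub>R A + (2 * cB * kB) *\<^sub>R B) dl
         + (cA * kA\<^sup>2 + cB * kB\<^sup>2) * (norm dl)\<^sup>2"
  unfolding power2_norm_eq_inner
  by (simp add: inner_diff_left inner_diff_right inner_add_left inner_add_right inner_commute
      power2_eq_square algebra_simps)

lemma vbound:
  fixes A B :: "'a::real_inner"
  assumes "cA > 0" "cB > 0"
  shows "(norm (\<alpha> *\<^sub>R A + \<beta> *\<^sub>R B))\<^sup>2 \<le> (2 * \<alpha>\<^sup>2 / cA + 2 * \<beta>\<^sup>2 / cB) * (cA * (norm A)\<^sup>2 + cB * (norm B)\<^sup>2)"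
proof -
  have "norm (\<alpha> *\<^sub>R A + \<beta> *\<^sub>R B) \<le> norm (\<alpha> *\<^sub>R A) + norm (\<beta> *\<^sub>R B)" by (rule norm_triangle_ineq)
  hence "(norm (\<alpha> *\<^sub>R A + \<beta> *\<^sub>R B))\<^sup>2 \<le> (norm (\<alpha> *\<^sub>R A) + norm (\<beta> *\<^sub>R B))\<^sup>2"
    by (simp add: power_mono)
  also have "\<dots> \<le> 2 * (norm (\<alpha> *\<^sub>R A))\<^sup>2 + 2 * (norm (\<beta> *\<^sub>R B))\<^sup>2"
  proof -
    have "0 \<le> (norm (\<alpha> *\<^sub>R A) - norm (\<beta> *\<^sub>R B))\<^sup>2" by simp
    thus ?thesis unfolding power2_sum power2_diff by linarith
  qed
  also have "\<dots> = 2 * \<alpha>\<^sup>2 * (norm A)\<^sup>2 + 2 * \<beta>\<^sup>2 * (norm B)\<^sup>2"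
    by (simp add: power_mult_distrib)
  also have "\<dots> \<le> (2 * \<alpha>\<^sup>2 / cA + 2 * \<beta>\<^sup>2 / cB) * (cA * (norm A)\<^sup>2 + cB * (norm B)\<^sup>2)"
  proof -
    have e: "(2 * \<alpha>\<^sup>2 / cA + 2 * \<beta>\<^sup>2 / cB) * (cA * (norm A)\<^sup>2 + cB * (norm B)\<^sup>2)
        = 2 * \<alpha>\<^sup>2 * (norm A)\<^sup>2 + 2 * \<beta>\<^sup>2 * (norm B)\<^sup>2
          + (2 * \<alpha>\<^sup>2 * (cB / cA) * (norm B)\<^sup>2 + 2 * \<beta>\<^sup>2 * (cA / cB) * (norm A)\<^sup>2)"
      using assms by (simp add: field_simps)
    have "0 \<le> 2 * \<alpha>\<^sup>2 * (cB / cA) * (norm B)\<^sup>2 + 2 * \<beta>\<^sup>2 * (cA / cB) * (norm A)\<^sup>2"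
      using assms by simp
    thus ?thesis unfolding e by linarith
  qed
  finally show ?thesis .
qed

lemma rp_filt_facts:
  fixes M :: "'s measure" and X U :: "nat \<Rightarrow> 's \<Rightarrow> 'a::euclidean_space"
  assumes mX: "\<And>k. X k \<in> borel_measurable M" and mU: "\<And>k. U k \<in> borel_measurable M"
  shows "subalgebra M (rp_filt M X U t)"
    "X t \<in> borel_measurable (rp_filt M X U t)" "U t \<in> borel_measurable (rp_filt M X U t)"
proof -
  define G where "G = {(\<lambda>s. (X k s, U k s)) -` A \<inter> space M | k A. k \<le> t \<and> A \<in> sets (borel :: ('a \<times> 'a) measure)}"
  have GP: "G \<subseteq> Pow (space M)" by (auto simp: G_def)
  have F: "rp_filt M X U t = sigma (space M) G" by (simp add: rp_filt_def G_def)
  have sp: "space (rp_filt M X U t) = space M" unfolding F using GP by simp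
  have se: "sets (rp_filt M X U t) = sigma_sets (space M) G" unfolding F using GP by simp
  have pm: "(\<lambda>s. (X k s, U k s)) \<in> borel_measurable M" for k
    using mX[of k] mU[of k] by (rule borel_measurable_continuous_Pair) (auto intro!: continuous_intros)
  have GM: "G \<subseteq> sets M" unfolding G_def using pm by (auto intro: measurable_sets)
  show "subalgebra M (rp_filt M X U t)"
    unfolding subalgebra_def sp se using sets.sigma_sets_subset[OF GM] by simp
  have pF: "(\<lambda>s. (X t s, U t s)) \<in> borel_measurable (rp_filt M X U t)"
  proof (rule measurableI)
    fix A :: "('a \<times> 'a) set" assume "A \<in> sets borel"
    hence "(\<lambda>s. (X t s, U t s)) -` A \<inter> space M \<in> G" unfolding G_def by blast
    thus "(\<lambda>s. (X t s, U t s)) -` A \<inter> space (rp_filt M X U t) \<in> sets (rp_filt M X U t)"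
      unfolding sp se by (rule sigma_sets.Basic)
  qed simp
  have "(\<lambda>s. fst (X t s, U t s)) \<in> borel_measurable (rp_filt M X U t)"
    by (rule measurable_compose[OF pF]) (rule borel_measurable_continuous_onI, intro continuous_intros)
  thus "X t \<in> borel_measurable (rp_filt M X U t)" by simp
  have "(\<lambda>s. snd (X t s, U t s)) \<in> borel_measurable (rp_filt M X U t)"
    by (rule measurable_compose[OF pF]) (rule borel_measurable_continuous_onI, intro continuous_intros)
  thus "U t \<in> borel_measurable (rp_filt M X U t)" by simp
qed

lemma conv_helper:
  fixes f :: "nat \<Rightarrow> 'a::real_normed_vector"
  assumes P: "P \<longlonglongrightarrow> 0" and b: "\<And>t. (norm (f t - l))\<^sup>2 \<le> K * P t" and K: "K \<ge> 0"
  shows "f \<longlonglongrightarrow> l"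
proof -
  have s: "(\<lambda>t. sqrt (K * P t)) \<longlonglongrightarrow> sqrt (K * 0)"
    by (intro tendsto_real_sqrt tendsto_mult tendsto_const P)
  have "(\<lambda>t. norm (f t - l)) \<longlonglongrightarrow> 0"
  proof (rule tendsto_sandwich[OF _ _ tendsto_const])
    show "\<forall>\<^sub>F t in sequentially. 0 \<le> norm (f t - l)" by simp
    show "\<forall>\<^sub>F t in sequentially. norm (f t - l) \<le> sqrt (K * P t)"
      using b by (intro always_eventually allI real_le_rsqrt) auto
    show "(\<lambda>t. sqrt (K * P t)) \<longlonglongrightarrow> 0" using s by simp
  qed
  hence "(\<lambda>t. f t - l) \<longlonglongrightarrow> 0" by (simp add: tendsto_norm_zero_iff)
  thus ?thesis by (rule LIM_zero_cancel)
qed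

theorem theorem8:
  fixes g h :: "'a::euclidean_space \<Rightarrow> ereal"
    and \<mu>g \<mu>hs \<gamma> \<omega> :: real
    and x0 u0 xs us :: 'a
    and M :: "'s measure"
    and R :: "nat \<Rightarrow> 's \<Rightarrow> 'a \<Rightarrow> 'a"
  defines "X \<equiv> rp_x \<gamma> \<omega> g h R x0 u0"
    and "U \<equiv> rp_u \<gamma> \<omega> g h R x0 u0"
    and "\<Psi> \<equiv> \<lambda>x u. (1 / \<gamma>) * (norm (x - xs))\<^sup>2
                   + (1 + \<omega>) * (\<gamma> * (1 + \<omega>) + 2 * \<mu>hs) * (norm (u - us))\<^sup>2"
    and "c \<equiv> max (1 / (1 + \<gamma> * \<mu>g))
                 (1 - 2 * (1 / (\<gamma> * (1 + \<omega>))) * \<mu>hs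
                        / ((1 + \<omega>) * (1 + 2 * (1 / (\<gamma> * (1 + \<omega>))) * \<mu>hs)))"
  assumes M: "prob_space M"
    and g: "proper_fun g" "closed_fun g" "convex_fun g"
    and h: "proper_fun h" "closed_fun h" "convex_fun h"
    and sc_g: "strongly_convex_fun \<mu>g g"
    and sc_hs: "strongly_convex_fun \<mu>hs (conj_fun h)"
    and pos: "\<mu>g > 0" "\<mu>hs > 0" "\<gamma> > 0" "\<omega> \<ge> 0"
    and kkt: "\<exists>x u. - u \<in> subdiff g x \<and> x \<in> subdiff (conj_fun h) u"
    and primal_sol: "\<forall>x. g xs + h xs \<le> g x + h x"
    and dual_sol: "\<forall>u. conj_fun g (- us) + conj_fun h us \<le> conj_fun g (- u) + conj_fun h u"
    and integrable: "\<forall>t. integrable M (\<lambda>s. R t s (rp_res \<gamma> \<omega> g h (X t s) (U t s)))"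
    and unbiased: "\<forall>t v. AE s in M. real_cond_exp M (rp_filt M X U t) (\<lambda>s. inner (R t s (rp_res \<gamma> \<omega> g h (X t s) (U t s))) v) s = inner (rp_res \<gamma> \<omega> g h (X t s) (U t s)) v"
    and variance: "\<forall>t. AE s in M. nn_cond_exp M (rp_filt M X U t) (\<lambda>s. ennreal ((norm (R t s (rp_res \<gamma> \<omega> g h (X t s) (U t s)) - rp_res \<gamma> \<omega> g h (X t s) (U t s)))\<^sup>2)) s
                                   \<le> ennreal (\<omega> * (norm (rp_res \<gamma> \<omega> g h (X t s) (U t s)))\<^sup>2)"
  shows "c = 1 - min (\<gamma> * \<mu>g / (1 + \<gamma> * \<mu>g))
                     (2 * (1 / (\<gamma> * (1 + \<omega>))) * \<mu>hs / ((1 + \<omega>) * (1 + 2 * (1 / (\<gamma> * (1 + \<omega>))) * \<mu>hs)))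
         \<and> c < 1
         \<and> (\<forall>t. (\<integral>\<^sup>+ s. ennreal (\<Psi> (X t s) (U t s)) \<partial>M) \<le> ennreal (c ^ t * \<Psi> x0 u0))
         \<and> (AE s in M. (\<lambda>t. X t s) \<longlonglongrightarrow> xs \<and> (\<lambda>t. rp_xhat \<gamma> g (X t s) (U t s)) \<longlonglongrightarrow> xs
                       \<and> (\<lambda>t. U t s) \<longlonglongrightarrow> us)"
proof -
  have gg: "good_fun g" and gh: "good_fun h" and k1: "- us \<in> subdiff g xs" and k2: "xs \<in> subdiff (conj_fun h) us"
    using kkt_setup[OF g h sc_g sc_hs pos(1,2) kkt primal_sol dual_sol] by blast+
  interpret prob_space M by (rule M)
  have \<gamma>: "\<gamma> > 0" and \<omega>: "\<omega> \<ge> 0" and \<mu>g: "\<mu>g > 0" and \<mu>h: "\<mu>hs > 0" using pos by auto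
  have w1: "1 + \<omega> > 0" using \<omega> by simp
  define C2 where "C2 = (1 + \<omega>) * (\<gamma> * (1 + \<omega>) + 2 * \<mu>hs)"
  have gp: "\<gamma> * (1 + \<omega>) > 0" using \<gamma> w1 by simp
  have C2: "C2 > 0"
  proof -
    have "\<gamma> * (1 + \<omega>) + 2 * \<mu>hs > 0" using gp \<mu>h by simp
    thus ?thesis using w1 unfolding C2_def by simp
  qed
  define kk where "kk = 1 / (\<gamma> * (1 + \<omega>) * (1 + \<omega>))"
  define \<kappa> where "\<kappa> = (1 / \<gamma>) * (1 / (1 + \<omega>))\<^sup>2 + C2 * kk\<^sup>2"
  have \<kappa>: "\<kappa> > 0" using \<gamma> w1 C2 by (simp add: \<kappa>_def kk_def add_pos_nonneg)
  have \<kappa>_eq: "\<kappa> = 1 / (\<gamma> * (1 + \<omega>)\<^sup>2) + C2 / ((\<gamma> * (1 + \<omega>))\<^sup>2 * (1 + \<omega>)\<^sup>2)"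
    unfolding \<kappa>_def kk_def using \<gamma> w1 by (simp add: field_simps power2_eq_square)
  define cA where "cA = \<gamma> * \<mu>g / (1 + \<gamma> * \<mu>g)"
  define cB where "cB = 2 * (1 / (\<gamma> * (1 + \<omega>))) * \<mu>hs / ((1 + \<omega>) * (1 + 2 * (1 / (\<gamma> * (1 + \<omega>))) * \<mu>hs))"
  have cA: "cA > 0" using \<gamma> \<mu>g by (simp add: cA_def add_pos_pos)
  have cB: "cB > 0" using \<gamma> \<mu>h w1 by (simp add: cB_def add_pos_pos)
  have p1: "1 + \<gamma> * \<mu>g > 0" using \<gamma> \<mu>g by (simp add: add_pos_pos)
  have c1eq: "1 / (1 + \<gamma> * \<mu>g) = 1 - cA"
    using p1 unfolding cA_def by (simp add: field_simps)
  have c_eq: "c = max (1 - cA) (1 - cB)" unfolding c_def c1eq cB_def ..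
  have c_min: "c = 1 - min cA cB" unfolding c_eq by (simp add: max_def min_def)
  have c_lt: "c < 1" using cA cB unfolding c_min by simp
  have c_ge: "c \<ge> 1 / (1 + \<gamma> * \<mu>g)" unfolding c_def by simp
  have c0: "c \<ge> 0" using c_ge \<gamma> \<mu>g by (smt (verit) divide_pos_pos mult_pos_pos)
  have part1: "c = 1 - min (\<gamma> * \<mu>g / (1 + \<gamma> * \<mu>g))
                     (2 * (1 / (\<gamma> * (1 + \<omega>))) * \<mu>hs / ((1 + \<omega>) * (1 + 2 * (1 / (\<gamma> * (1 + \<omega>))) * \<mu>hs)))"
    using c_min by (simp add: cA_def cB_def)
  define xhf where "xhf x u = rp_xhat \<gamma> g x u" for x u
  define rf where "rf x u = rp_res \<gamma> \<omega> g h x u" for x u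
  define Af where "Af x u = (xhf x u - xs) - (1 / (1 + \<omega>)) *\<^sub>R rf x u" for x u
  define Bf where "Bf x u = (u - us) + kk *\<^sub>R rf x u" for x u
  define Qf where "Qf x u = (1 / \<gamma>) * (norm (Af x u))\<^sup>2 + C2 * (norm (Bf x u))\<^sup>2" for x u
  define Vf where "Vf x u = (- (2 * (1 / \<gamma>) * (1 / (1 + \<omega>)))) *\<^sub>R Af x u + (2 * C2 * kk) *\<^sub>R Bf x u" for x u
  have cx: "continuous_on UNIV (\<lambda>p. xhf (fst p) (snd p))" unfolding xhf_def by (rule xhat_cont[OF gg \<gamma>])
  have cr: "continuous_on UNIV (\<lambda>p. rf (fst p) (snd p))" unfolding rf_def by (rule res_cont[OF gg gh \<gamma> \<omega>])
  have cQ: "continuous_on UNIV (\<lambda>p. Qf (fst p) (snd p))"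
    unfolding Qf_def Af_def Bf_def by (intro continuous_intros cx cr)
  have cV: "continuous_on UNIV (\<lambda>p. Vf (fst p) (snd p))"
    unfolding Vf_def Af_def Bf_def by (intro continuous_intros cx cr)
  define d where "d t = (\<lambda>s. R t s (rf (X t s) (U t s)))" for t
  have dint: "integrable M (d t)" for t using integrable by (simp add: d_def rf_def)
  have dmeas: "d t \<in> borel_measurable M" for t using dint[of t] by (rule borel_measurable_integrable)
  have X0: "X 0 = (\<lambda>s. x0)" and U0: "U 0 = (\<lambda>s. u0)" by (auto simp: X_def U_def rp_x_0 rp_u_0)
  have XS: "X (Suc t) = (\<lambda>s. xhf (X t s) (U t s) - (1 / (1 + \<omega>)) *\<^sub>R d t s)" for t
    by (auto simp: X_def U_def rp_x_Suc xhf_def d_def rf_def)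
  have US: "U (Suc t) = (\<lambda>s. U t s + (1 / (\<gamma> * (1 + \<omega>)\<^sup>2)) *\<^sub>R d t s)" for t
    by (auto simp: X_def U_def rp_u_Suc d_def rf_def)
  have mXU: "X t \<in> borel_measurable M \<and> U t \<in> borel_measurable M" for t
  proof (induction t)
    case 0 show ?case by (simp add: X0 U0)
  next
    case (Suc t)
    hence mX: "X t \<in> borel_measurable M" and mU: "U t \<in> borel_measurable M" by auto
    have "(\<lambda>s. xhf (X t s) (U t s)) \<in> borel_measurable M"
      by (rule borel_measurable_continuous_Pair[OF mX mU cx])
    moreover have "(\<lambda>s. (1 / (1 + \<omega>)) *\<^sub>R d t s) \<in> borel_measurable M" using dmeas[of t] by measurable
    moreover have "(\<lambda>s. (1 / (\<gamma> * (1 + \<omega>)\<^sup>2)) *\<^sub>R d t s) \<in> borel_measurable M" using dmeas[of t] by measurable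
    ultimately show ?case unfolding XS US using mU by (auto intro!: borel_measurable_diff borel_measurable_add)
  qed
  have mX: "X t \<in> borel_measurable M" and mU: "U t \<in> borel_measurable M" for t using mXU by auto
  define PS where "PS t = (\<lambda>s. \<Psi> (X t s) (U t s))" for t
  have PS_eq: "PS t s = (1 / \<gamma>) * (norm (X t s - xs))\<^sup>2 + C2 * (norm (U t s - us))\<^sup>2" for t s
    by (simp add: PS_def \<Psi>_def C2_def)
  have PS0: "PS t s \<ge> 0" for t s using \<gamma> C2 unfolding PS_eq by simp
  have main: "integrable M (PS t) \<and> integral\<^sup>L M (PS t) \<le> c ^ t * \<Psi> x0 u0" for t
  proof (induction t)
    case 0
    have "PS 0 = (\<lambda>s. \<Psi> x0 u0)" by (simp add: PS_def X0 U0)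
    thus ?case by (simp add: prob_space)
  next
    case (Suc t)
    have IH1: "integrable M (PS t)" and IH2: "integral\<^sup>L M (PS t) \<le> c ^ t * \<Psi> x0 u0" using Suc by auto
    have sub: "subalgebra M (rp_filt M X U t)" and mXF: "X t \<in> borel_measurable (rp_filt M X U t)"
      and mUF: "U t \<in> borel_measurable (rp_filt M X U t)"
      using rp_filt_facts[where X=X and U=U and M=M and t=t] mX mU by blast+
    define Cv where "Cv = 2 * (- (2 * (1 / \<gamma>) * (1 / (1 + \<omega>))))\<^sup>2 / (1 / \<gamma>) + 2 * (2 * C2 * kk)\<^sup>2 / C2"
    have Cv: "Cv \<ge> 0" using \<gamma> C2 by (simp add: Cv_def)
    have mP0: "PS t \<in> borel_measurable M" using IH1 by (rule borel_measurable_integrable)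
    have mQ: "(\<lambda>s. Qf (X t s) (U t s)) \<in> borel_measurable M"
      by (rule borel_measurable_continuous_Pair[OF mX mU cQ])
    have mV: "(\<lambda>s. Vf (X t s) (U t s)) \<in> borel_measurable (rp_filt M X U t)"
      by (rule borel_measurable_continuous_Pair[OF mXF mUF cV])
    have mr: "(\<lambda>s. rf (X t s) (U t s)) \<in> borel_measurable (rp_filt M X U t)"
      by (rule borel_measurable_continuous_Pair[OF mXF mUF cr])
    have kk_eq: "1 / (\<gamma> * (1 + \<omega>)\<^sup>2) = kk" by (simp add: kk_def power2_eq_square mult.assoc)
    have dec: "PS (Suc t) s = Qf (X t s) (U t s) + inner (Vf (X t s) (U t s)) (d t s - rf (X t s) (U t s))
                 + \<kappa> * (norm (d t s - rf (X t s) (U t s)))\<^sup>2" for s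
    proof -
      define x u dd r where "x = X t s" and "u = U t s" and "dd = d t s" and "r = rf x u"
      have ex: "X (Suc t) s - xs = Af x u - (1 / (1 + \<omega>)) *\<^sub>R (dd - r)"
        by (simp add: XS Af_def x_def u_def dd_def r_def algebra_simps)
      have eu: "U (Suc t) s - us = Bf x u + kk *\<^sub>R (dd - r)"
        by (simp add: US kk_eq Bf_def x_def u_def dd_def r_def algebra_simps)
      have "PS (Suc t) s = (1 / \<gamma>) * (norm (Af x u - (1 / (1 + \<omega>)) *\<^sub>R (dd - r)))\<^sup>2
                          + C2 * (norm (Bf x u + kk *\<^sub>R (dd - r)))\<^sup>2"
        unfolding PS_eq ex eu ..
      also have "\<dots> = Qf x u + inner (Vf x u) (dd - r) + \<kappa> * (norm (dd - r))\<^sup>2"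
        unfolding decomp Qf_def Vf_def \<kappa>_def ..
      finally show ?thesis by (simp add: x_def u_def dd_def r_def)
    qed
    have bnd: "Qf (X t s) (U t s) + \<kappa> * \<omega> * (norm (rf (X t s) (U t s)))\<^sup>2 \<le> c * PS t s" for s
    proof -
      define x u where "x = X t s" and "u = U t s"
      note DS = det_step[OF gg gh sc_g sc_hs \<gamma> \<omega> less_imp_le[OF \<mu>g] less_imp_le[OF \<mu>h] k1 k2, of x u]
      have D1: "(1 / \<gamma>) * (norm (Af x u))\<^sup>2 + C2 * (norm (Bf x u))\<^sup>2 + \<omega> * \<kappa> * (norm (rf x u))\<^sup>2
          \<le> (1 / (1 + \<gamma> * \<mu>g)) * ((1 / \<gamma>) * (norm (x - xs))\<^sup>2) + (1 - cB) * (C2 * (norm (u - us))\<^sup>2)"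
        using DS unfolding Af_def Bf_def xhf_def rf_def \<kappa>_eq cB_def C2_def kk_def .
      have T1: "0 \<le> (1 / \<gamma>) * (norm (x - xs))\<^sup>2" using \<gamma> by simp
      have T2: "0 \<le> C2 * (norm (u - us))\<^sup>2" using C2 by simp
      have "(1 / (1 + \<gamma> * \<mu>g)) * ((1 / \<gamma>) * (norm (x - xs))\<^sup>2) \<le> c * ((1 / \<gamma>) * (norm (x - xs))\<^sup>2)"
        using c_ge T1 by (rule mult_right_mono)
      moreover have "(1 - cB) * (C2 * (norm (u - us))\<^sup>2) \<le> c * (C2 * (norm (u - us))\<^sup>2)"
        using T2 by (intro mult_right_mono) (auto simp: c_eq)
      ultimately have "(1 / \<gamma>) * (norm (Af x u))\<^sup>2 + C2 * (norm (Bf x u))\<^sup>2 + \<omega> * \<kappa> * (norm (rf x u))\<^sup>2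
          \<le> c * ((1 / \<gamma>) * (norm (x - xs))\<^sup>2 + C2 * (norm (u - us))\<^sup>2)"
        using D1 by (simp add: algebra_simps)
      thus ?thesis by (simp add: Qf_def PS_eq x_def u_def mult.commute mult.left_commute)
    qed
    have Q0: "0 \<le> Qf (X t s) (U t s)" for s using \<gamma> C2 by (simp add: Qf_def)
    have Vb: "(norm (Vf (X t s) (U t s)))\<^sup>2 \<le> Cv * Qf (X t s) (U t s)" for s
      unfolding Vf_def Qf_def Cv_def by (rule vbound) (use \<gamma> C2 in auto)
    have unb: "AE s in M. real_cond_exp M (rp_filt M X U t) (\<lambda>s. inner (d t s) v) s = inner (rf (X t s) (U t s)) v" for v
      using unbiased by (simp add: d_def rf_def)
    have var: "AE s in M. nn_cond_exp M (rp_filt M X U t) (\<lambda>s. ennreal ((norm (d t s - rf (X t s) (U t s)))\<^sup>2)) s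
                 \<le> ennreal (\<omega> * (norm (rf (X t s) (U t s)))\<^sup>2)"
      using variance by (simp add: d_def rf_def)
    note ES = exp_step[where Pb="PS (Suc t)" and Pa="PS t" and Q="\<lambda>s. Qf (X t s) (U t s)"
        and V="\<lambda>s. Vf (X t s) (U t s)" and d="d t" and r="\<lambda>s. rf (X t s) (U t s)" and \<kappa>=\<kappa> and \<omega>=\<omega>
        and c=c and Cv=Cv, OF M sub mP0 mQ mV mr dint dec bnd Q0 Vb \<kappa> \<omega> c0 Cv IH1 unb var]
    have "integral\<^sup>L M (PS (Suc t)) \<le> c * integral\<^sup>L M (PS t)" by (rule ES(2))
    also have "\<dots> \<le> c * (c ^ t * \<Psi> x0 u0)" using IH2 c0 by (rule mult_left_mono)
    finally show ?case using ES(1) by simp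
  qed
  have mPS [measurable]: "PS t \<in> borel_measurable M" for t using main[of t] by (auto intro: borel_measurable_integrable)
  have expect: "(\<integral>\<^sup>+ s. ennreal (PS t s) \<partial>M) \<le> ennreal (c ^ t * \<Psi> x0 u0)" for t
  proof -
    have "(\<integral>\<^sup>+ s. ennreal (PS t s) \<partial>M) = ennreal (integral\<^sup>L M (PS t))"
      using main[of t] PS0 by (intro nn_integral_eq_integral) auto
    also have "\<dots> \<le> ennreal (c ^ t * \<Psi> x0 u0)" using main[of t] by (intro ennreal_leI) auto
    finally show ?thesis .
  qed
  have Psi00: "\<Psi> x0 u0 \<ge> 0" using PS0[of 0] by (simp add: PS_def X0 U0)
  have summ: "summable (\<lambda>t. c ^ t * \<Psi> x0 u0)"
    using c0 c_lt by (intro summable_mult2 summable_geometric) simp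
  have "(\<integral>\<^sup>+ s. (\<Sum>t. ennreal (PS t s)) \<partial>M) = (\<Sum>t. \<integral>\<^sup>+ s. ennreal (PS t s) \<partial>M)"
    by (rule nn_integral_suminf) measurable
  also have "\<dots> \<le> (\<Sum>t. ennreal (c ^ t * \<Psi> x0 u0))"
    by (intro suminf_le expect summableI)
  also have "\<dots> = ennreal (\<Sum>t. c ^ t * \<Psi> x0 u0)"
    using summ c0 Psi00 by (intro suminf_ennreal2) auto
  finally have "(\<integral>\<^sup>+ s. (\<Sum>t. ennreal (PS t s)) \<partial>M) \<noteq> \<infinity>"
    by (metis ennreal_neq_top infinity_ennreal_def neq_top_trans)
  hence AEfin: "AE s in M. (\<Sum>t. ennreal (PS t s)) \<noteq> \<infinity>"
    by (intro nn_integral_noteq_infinite) measurable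
  have conv: "(\<lambda>t. X t s) \<longlonglongrightarrow> xs \<and> (\<lambda>t. rp_xhat \<gamma> g (X t s) (U t s)) \<longlonglongrightarrow> xs \<and> (\<lambda>t. U t s) \<longlonglongrightarrow> us"
    if fin: "(\<Sum>t. ennreal (PS t s)) \<noteq> \<infinity>" for s
  proof -
    have "summable (\<lambda>t. PS t s)"
      using fin PS0 by (intro summable_suminf_not_top) (auto simp: infinity_ennreal_def)
    hence P: "(\<lambda>t. PS t s) \<longlonglongrightarrow> 0" by (rule summable_LIMSEQ_zero)
    have cX: "(\<lambda>t. X t s) \<longlonglongrightarrow> xs"
    proof (rule conv_helper[OF P])
      fix t
      have "(1 / \<gamma>) * (norm (X t s - xs))\<^sup>2 \<le> PS t s" using C2 unfolding PS_eq by simp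
      thus "(norm (X t s - xs))\<^sup>2 \<le> \<gamma> * PS t s" using \<gamma> by (simp add: field_simps)
    qed (use \<gamma> in simp)
    have cU: "(\<lambda>t. U t s) \<longlonglongrightarrow> us"
    proof (rule conv_helper[OF P])
      fix t
      have "C2 * (norm (U t s - us))\<^sup>2 \<le> PS t s" using \<gamma> unfolding PS_eq by simp
      thus "(norm (U t s - us))\<^sup>2 \<le> (1 / C2) * PS t s" using C2 by (simp add: field_simps)
    qed (use C2 in simp)
    have fixpt: "xhf xs us = xs"
    proof -
      have "(1 / \<gamma>) *\<^sub>R ((xs - \<gamma> *\<^sub>R us) - xs) = - us" using \<gamma> by simp
      hence "(1 / \<gamma>) *\<^sub>R ((xs - \<gamma> *\<^sub>R us) - xs) \<in> subdiff g xs" using k1 by simp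
      hence "prox \<gamma> g (xs - \<gamma> *\<^sub>R us) = xs" by (rule prox_unique[OF gg \<gamma>])
      thus ?thesis by (simp add: xhf_def rp_xhat_def)
    qed
    have ic: "isCont (\<lambda>p. xhf (fst p) (snd p)) (xs, us)"
      using cx by (simp add: continuous_on_eq_continuous_at)
    have "(\<lambda>t. (\<lambda>p. xhf (fst p) (snd p)) (X t s, U t s)) \<longlonglongrightarrow> (\<lambda>p. xhf (fst p) (snd p)) (xs, us)"
      by (rule isCont_tendsto_compose[OF ic tendsto_Pair[OF cX cU]])
    hence "(\<lambda>t. rp_xhat \<gamma> g (X t s) (U t s)) \<longlonglongrightarrow> xs" using fixpt by (simp add: xhf_def)
    with cX cU show ?thesis by blast
  qed
  show ?thesis
  proof (intro conjI)
    show "c = 1 - min (\<gamma> * \<mu>g / (1 + \<gamma> * \<mu>g))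
                     (2 * (1 / (\<gamma> * (1 + \<omega>))) * \<mu>hs / ((1 + \<omega>) * (1 + 2 * (1 / (\<gamma> * (1 + \<omega>))) * \<mu>hs)))"
      by (rule part1)
    show "c < 1" by (rule c_lt)
    show "\<forall>t. (\<integral>\<^sup>+ s. ennreal (\<Psi> (X t s) (U t s)) \<partial>M) \<le> ennreal (c ^ t * \<Psi> x0 u0)"
      using expect by (simp add: PS_def)
    show "AE s in M. (\<lambda>t. X t s) \<longlonglongrightarrow> xs \<and> (\<lambda>t. rp_xhat \<gamma> g (X t s) (U t s)) \<longlonglongrightarrow> xs
                       \<and> (\<lambda>t. U t s) \<longlonglongrightarrow> us"
      using AEfin by eventually_elim (rule conv)
  qed
qed

end
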